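(* Let $p$ be a polynomial, $(c,\epsilon,\delta)$ a comonoid in $(\mathbf{Poly},\mathcal{y},\triangleleft)$, and $s$ a polynomial. Composing with $\pi\triangleleft s$, where $\pi\colon\mathfrak{c}_p\to p$ is the canonical projection, gives a bijection between $(\mathfrak{c}_p,c)$-effects handler structures $\Psi\colon s\triangleleft c\to\mathfrak{c}_p\triangleleft s$ on $s$ and elementary $(p,c)$-effects handler structures $\varphi\colon s\triangleleft c\to p\triangleleft s$ on $s$.
   Context: Polynomials $p=\sum_{I\in p(1)}\mathcal{y}^{p[I]}$ form $\mathbf{Poly}$ with composition $\triangleleft$ (unit $\mathcal{y}$, the polynomial with one position and one direction) and cartesian product $\times$. $\mathfrak{c}_p$ is the cofree comonoid on $p$: $\mathfrak{c}_p=\lim_i p^{(i)}$ where $p^{(0)}=\mathcal{y}$, $p^{(1+i)}=\mathcal{y}\times(p\triangleleft p^{(i)})$, with transition maps $\pi^{(0)}$ the projection and $\pi^{(1+i)}=\mathcal{y}\times(p\triangleleft\pi^{(i)})$; it carries a comonoid structure with counit the projection to $p^{(0)}$, and $\pi\colon\mathfrak{c}_p\to p$ is the projection $\mathfrak{c}_p\to p^{(1)}=\mathcal{y}\times p\to p$. For comonoids $c,d$, a $(c,d)$-effects handler is a polynomial $s$ with a morphism $\varphi\colon s\triangleleft d\to c\triangleleft s$ such that $(\epsilon_c\triangleleft s)\circ\varphi=s\triangleleft\epsilon_d$ and $(\delta_c\triangleleft s)\circ\varphi=(c\triangleleft\varphi)\circ(\varphi\triangleleft d)\circ(s\triangleleft\delta_d)$.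 For polynomials $p,q$, an elementary $(p,q)$-effects handler is a polynomial $s$ with any morphism $s\triangleleft q\to p\triangleleft s$. *)

theory Defs
  imports "HOL-Library.FuncSet"
begin

text \<open>Polynomials p = sum over positions I in p(1) of y^(p[I]), represented by a set of
positions and a family of direction sets.\<close>

type_synonym ('i,'d) poly = "'i set \<times> ('i \<Rightarrow> 'd set)"

definition ppos :: "('i,'d) poly \<Rightarrow> 'i set" where "ppos p = fst p"
definition pdir :: "('i,'d) poly \<Rightarrow> 'i \<Rightarrow> 'd set" where "pdir p = snd p"

text \<open>Morphisms are taken
extensional (undefined outside their domain), so that equality of morphisms is HOL equality.\<close>

definition is_hom :: "('i,'d) poly \<Rightarrow> ('j,'e) poly \<Rightarrow> ('i \<Rightarrow> 'j) \<times> ('i \<Rightarrow> 'e \<Rightarrow> 'd) \<Rightarrow> bool" where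
  "is_hom p q f \<longleftrightarrow>
     (\<forall>I\<in>ppos p. fst f I \<in> ppos q \<and> (\<forall>e\<in>pdir q (fst f I). snd f I e \<in> pdir p I))
   \<and> (\<forall>I. I \<notin> ppos p \<longrightarrow> fst f I = undefined)
   \<and> (\<forall>I e. (I \<notin> ppos p \<or> e \<notin> pdir q (fst f I)) \<longrightarrow> snd f I e = undefined)"

definition restrict_hom :: "('i,'d) poly \<Rightarrow> ('j,'e) poly \<Rightarrow> ('i \<Rightarrow> 'j) \<times> ('i \<Rightarrow> 'e \<Rightarrow> 'd)
    \<Rightarrow> ('i \<Rightarrow> 'j) \<times> ('i \<Rightarrow> 'e \<Rightarrow> 'd)" where
  "restrict_hom p q F =
     (\<lambda>I. if I \<in> ppos p then fst F I else undefined,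
      \<lambda>I e. if I \<in> ppos p \<and> e \<in> pdir q (fst F I) then snd F I e else undefined)"

definition ypoly :: "(unit, unit) poly" where "ypoly = ({()}, \<lambda>_. {()})"

definition tri :: "('i,'d) poly \<Rightarrow> ('j,'e) poly \<Rightarrow> ('i \<times> ('d \<Rightarrow> 'j), 'd \<times> 'e) poly" where
  "tri p q = ({(I, f). I \<in> ppos p \<and> f \<in> PiE (pdir p I) (\<lambda>_. ppos q)},
              \<lambda>(I, f). {(d, e). d \<in> pdir p I \<and> e \<in> pdir q (f d)})"

definition id_hom :: "('i,'d) poly \<Rightarrow> ('i \<Rightarrow> 'i) \<times> ('i \<Rightarrow> 'd \<Rightarrow> 'd)" where
  "id_hom p = restrict_hom p p (\<lambda>I. I, \<lambda>I e. e)"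

text \<open>comp_hom p r g f is g \<circ> f, for f : p -> q and g : q -> r.\<close>
definition comp_hom :: "('i,'d) poly \<Rightarrow> ('k,'g) poly \<Rightarrow> ('j \<Rightarrow> 'k) \<times> ('j \<Rightarrow> 'g \<Rightarrow> 'e)
    \<Rightarrow> ('i \<Rightarrow> 'j) \<times> ('i \<Rightarrow> 'e \<Rightarrow> 'd) \<Rightarrow> ('i \<Rightarrow> 'k) \<times> ('i \<Rightarrow> 'g \<Rightarrow> 'd)" where
  "comp_hom p r g f = restrict_hom p r (fst g \<circ> fst f, \<lambda>I e. snd f I (snd g (fst f I) e))"

definition tri_hom where
  "tri_hom p q p' q' f g = restrict_hom (tri p q) (tri p' q')
     (\<lambda>(I, h). (fst f I, restrict (\<lambda>d'. fst g (h (snd f I d'))) (pdir p' (fst f I))),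
      \<lambda>(I, h) (d', e'). (snd f I d', snd g (h (snd f I d')) e'))"

definition lunit_inv :: "('i,'d) poly \<Rightarrow> _" where
  "lunit_inv s = restrict_hom (tri ypoly s) s (\<lambda>(u, h). h (), \<lambda>_ e. ((), e))"

definition runit_inv :: "('i,'d) poly \<Rightarrow> _" where
  "runit_inv s = restrict_hom (tri s ypoly) s (\<lambda>(I, h). I, \<lambda>_ d. (d, ()))"

definition assoc where
  "assoc p q r = restrict_hom (tri p (tri q r)) (tri (tri p q) r)
     (\<lambda>(I, h). ((I, restrict (\<lambda>d. fst (h d)) (pdir p I)),
                restrict (\<lambda>x. snd (h (fst x)) (snd x))
                         (pdir (tri p q) (I, restrict (\<lambda>d. fst (h d)) (pdir p I)))),
      \<lambda>_ x. (fst (fst x), (snd (fst x), snd x)))"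

definition assoc_inv where
  "assoc_inv p q r = restrict_hom (tri (tri p q) r) (tri p (tri q r))
     (\<lambda>((I, g), h). (I, restrict (\<lambda>d. (g d, restrict (\<lambda>e. h (d, e)) (pdir q (g d)))) (pdir p I)),
      \<lambda>_ x. ((fst x, fst (snd x)), snd (snd x)))"

definition comonoid :: "('i,'d) poly \<Rightarrow> ('i \<Rightarrow> unit) \<times> ('i \<Rightarrow> unit \<Rightarrow> 'd)
    \<Rightarrow> ('i \<Rightarrow> 'i \<times> ('d \<Rightarrow> 'i)) \<times> ('i \<Rightarrow> 'd \<times> 'd \<Rightarrow> 'd) \<Rightarrow> bool" where
  "comonoid c eps delta \<longleftrightarrow>
     is_hom c ypoly eps \<and> is_hom c (tri c c) delta
   \<and> comp_hom c c (lunit_inv c)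
       (comp_hom c (tri ypoly c) (tri_hom c c ypoly c eps (id_hom c)) delta) = id_hom c
   \<and> comp_hom c c (runit_inv c)
       (comp_hom c (tri c ypoly) (tri_hom c c c ypoly (id_hom c) eps) delta) = id_hom c
   \<and> comp_hom c (tri (tri c c) c) (tri_hom c c (tri c c) c delta (id_hom c)) delta
     = comp_hom c (tri (tri c c) c) (assoc c c c)
         (comp_hom c (tri c (tri c c)) (tri_hom c c c (tri c c) (id_hom c) delta) delta)"

definition handler where
  "handler c epsc deltac d epsd deltad s phi \<longleftrightarrow>
     is_hom (tri s d) (tri c s) phi
   \<and> comp_hom (tri s d) s (lunit_inv s)
       (comp_hom (tri s d) (tri ypoly s) (tri_hom c s ypoly s epsc (id_hom s)) phi)
     = comp_hom (tri s d) s (runit_inv s) (tri_hom s d s ypoly (id_hom s) epsd)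
   \<and> comp_hom (tri s d) (tri (tri c c) s) (tri_hom c s (tri c c) s deltac (id_hom s)) phi
     = comp_hom (tri s d) (tri (tri c c) s) (assoc c c s)
        (comp_hom (tri s d) (tri c (tri c s)) (tri_hom c (tri s d) c (tri c s) (id_hom c) phi)
         (comp_hom (tri s d) (tri c (tri s d)) (assoc_inv c s d)
          (comp_hom (tri s d) (tri (tri c s) d) (tri_hom (tri s d) d (tri c s) d phi (id_hom d))
           (comp_hom (tri s d) (tri (tri s d) d) (assoc s d d)
             (tri_hom s d s (tri d d) (id_hom s) deltad)))))"

text \<open>Cofree comonoid c_p: positions are p-trees (possibly infinite), encoded as functions from
finite paths of directions to positions (undefined off the tree); directions at a tree are
its finite rooted paths.  This is the explicit form of lim_i p^(i).\<close>
definition tpaths :: "('i,'d) poly \<Rightarrow> ('d list \<Rightarrow> 'i) \<Rightarrow> 'd list set" where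
  "tpaths p t = {ds. \<forall>k < length ds. ds ! k \<in> pdir p (t (take k ds))}"

definition cofree :: "('i,'d) poly \<Rightarrow> ('d list \<Rightarrow> 'i, 'd list) poly" where
  "cofree p = ({t. (\<forall>ds \<in> tpaths p t. t ds \<in> ppos p) \<and> (\<forall>ds. ds \<notin> tpaths p t \<longrightarrow> t ds = undefined)},
               tpaths p)"

definition cofree_eps :: "('i,'d) poly \<Rightarrow> _" where
  "cofree_eps p = restrict_hom (cofree p) ypoly (\<lambda>_. (), \<lambda>_ _. [])"

definition cofree_delta :: "('i,'d) poly \<Rightarrow> _" where
  "cofree_delta p = restrict_hom (cofree p) (tri (cofree p) (cofree p))
     (\<lambda>t. (t, restrict (\<lambda>ds es. t (ds @ es)) (tpaths p t)), \<lambda>_ x. fst x @ snd x)"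

definition cofree_proj :: "('i,'d) poly \<Rightarrow> _" where
  "cofree_proj p = restrict_hom (cofree p) p (\<lambda>t. t [], \<lambda>_ d. [d])"

end

theory Submission
  imports Defs
begin


lemma ppos_pair[simp]: "ppos (A,B) = A" by (simp add: ppos_def)
lemma pdir_pair[simp]: "pdir (A,B) = B" by (simp add: pdir_def)

lemma ppos_tri_mem[simp]: "(I,f) \<in> ppos (tri p q) \<longleftrightarrow> I \<in> ppos p \<and> f \<in> PiE (pdir p I) (\<lambda>_. ppos q)"
  by (simp add: tri_def)
lemma pdir_tri_mem[simp]: "(d,e) \<in> pdir (tri p q) (I,f) \<longleftrightarrow> d \<in> pdir p I \<and> e \<in> pdir q (f d)"
  by (simp add: tri_def)
lemma pdir_tri: "pdir (tri p q) (I,f) = {(d,e). d \<in> pdir p I \<and> e \<in> pdir q (f d)}"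
  by (simp add: tri_def)
lemma ppos_ypoly[simp]: "ppos ypoly = {()}" by (simp add: ypoly_def)
lemma pdir_ypoly[simp]: "pdir ypoly u = {()}" by (simp add: ypoly_def)

lemma fst_restrict_hom: "I \<in> ppos p \<Longrightarrow> fst (restrict_hom p q F) I = fst F I"
  by (simp add: restrict_hom_def)
lemma snd_restrict_hom: "I \<in> ppos p \<Longrightarrow> e \<in> pdir q (fst F I) \<Longrightarrow> snd (restrict_hom p q F) I e = snd F I e"
  by (simp add: restrict_hom_def)

lemma is_hom_restrict:
  assumes "\<And>I. I\<in>ppos p \<Longrightarrow> fst F I \<in> ppos q"
    "\<And>I e. I\<in>ppos p \<Longrightarrow> e\<in>pdir q (fst F I) \<Longrightarrow> snd F I e \<in> pdir p I"
  shows "is_hom p q (restrict_hom p q F)"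
  using assms by (auto simp: is_hom_def restrict_hom_def)

lemma restrict_hom_eq_iff:
  "restrict_hom p q F = restrict_hom p q G \<longleftrightarrow>
   (\<forall>I\<in>ppos p. fst F I = fst G I \<and> (\<forall>e\<in>pdir q (fst F I). snd F I e = snd G I e))"
  (is "?L \<longleftrightarrow> ?R")
proof
  assume L: ?L
  show ?R
  proof
    fix I assume I: "I \<in> ppos p"
    from arg_cong[OF L, of "\<lambda>h. fst h I"] I have fI: "fst F I = fst G I" by (simp add: restrict_hom_def)
    moreover have "\<forall>e\<in>pdir q (fst F I). snd F I e = snd G I e"
    proof
      fix e assume "e \<in> pdir q (fst F I)"
      with arg_cong[OF L, of "\<lambda>h. snd h I e"] I fI show "snd F I e = snd G I e"
        by (simp add: restrict_hom_def split: if_splits)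
    qed
    ultimately show "fst F I = fst G I \<and> (\<forall>e\<in>pdir q (fst F I). snd F I e = snd G I e)" by blast
  qed
next
  assume R: ?R
  show ?L unfolding restrict_hom_def
    by (rule prod_eqI) (auto intro!: ext simp: R)
qed

lemma is_hom_pos: "is_hom p q f \<Longrightarrow> I \<in> ppos p \<Longrightarrow> fst f I \<in> ppos q"
  by (simp add: is_hom_def)
lemma is_hom_dir: "is_hom p q f \<Longrightarrow> I \<in> ppos p \<Longrightarrow> e \<in> pdir q (fst f I) \<Longrightarrow> snd f I e \<in> pdir p I"
  by (simp add: is_hom_def)

lemma restrict_hom_self: "is_hom p q f \<Longrightarrow> restrict_hom p q f = f"
  unfolding restrict_hom_def is_hom_def
  by (rule prod_eqI) (auto intro!: ext)

lemma hom_eqI: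
  assumes "is_hom p q f" "is_hom p q g"
    "\<And>I. I\<in>ppos p \<Longrightarrow> fst f I = fst g I"
    "\<And>I e. I\<in>ppos p \<Longrightarrow> e \<in> pdir q (fst f I) \<Longrightarrow> snd f I e = snd g I e"
  shows "f = g"
proof -
  have "restrict_hom p q f = restrict_hom p q g"
    using assms(3,4) by (simp add: restrict_hom_eq_iff)
  thus ?thesis using restrict_hom_self[OF assms(1)] restrict_hom_self[OF assms(2)] by simp
qed

lemma hom_eq_iff:
  assumes "is_hom p q f" "is_hom p q g"
  shows "f = g \<longleftrightarrow> (\<forall>I\<in>ppos p. fst f I = fst g I \<and> (\<forall>e\<in>pdir q (fst f I). snd f I e = snd g I e))"
  using hom_eqI[OF assms] by auto

lemma comp_hom_fst: "I \<in> ppos p \<Longrightarrow> fst (comp_hom p r g f) I = fst g (fst f I)"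
  by (simp add: comp_hom_def restrict_hom_def)
lemma comp_hom_snd: "I \<in> ppos p \<Longrightarrow> e \<in> pdir r (fst g (fst f I)) \<Longrightarrow>
   snd (comp_hom p r g f) I e = snd f I (snd g (fst f I) e)"
  by (simp add: comp_hom_def restrict_hom_def)
lemma comp_hom_hom: "is_hom p q f \<Longrightarrow> is_hom q r g \<Longrightarrow> is_hom p r (comp_hom p r g f)"
  unfolding comp_hom_def by (rule is_hom_restrict) (auto dest: is_hom_pos is_hom_dir)

lemma comp_hom_eq_iff:
  "comp_hom p r g f = comp_hom p r g' f' \<longleftrightarrow>
   (\<forall>I\<in>ppos p. fst g (fst f I) = fst g' (fst f' I) \<and>
      (\<forall>e\<in>pdir r (fst g (fst f I)). snd f I (snd g (fst f I) e) = snd f' I (snd g' (fst f' I) e)))"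
  unfolding comp_hom_def restrict_hom_eq_iff by simp

lemma id_hom_hom: "is_hom p p (id_hom p)"
  unfolding id_hom_def by (rule is_hom_restrict) auto
lemma id_hom_fst: "I \<in> ppos p \<Longrightarrow> fst (id_hom p) I = I"
  by (simp add: id_hom_def restrict_hom_def)
lemma id_hom_snd: "I \<in> ppos p \<Longrightarrow> e \<in> pdir p I \<Longrightarrow> snd (id_hom p) I e = e"
  by (simp add: id_hom_def restrict_hom_def)

lemma tri_hom_fst: "(I,h) \<in> ppos (tri p q) \<Longrightarrow>
  fst (tri_hom p q p' q' f g) (I,h) = (fst f I, restrict (\<lambda>d'. fst g (h (snd f I d'))) (pdir p' (fst f I)))"
  by (simp add: tri_hom_def restrict_hom_def del: ppos_tri_mem)
lemma tri_hom_snd: "(I,h) \<in> ppos (tri p q) \<Longrightarrow> d' \<in> pdir p' (fst f I) \<Longrightarrow> e' \<in> pdir q' (fst g (h (snd f I d'))) \<Longrightarrow>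
  snd (tri_hom p q p' q' f g) (I,h) (d',e') = (snd f I d', snd g (h (snd f I d')) e')"
  by (simp add: tri_hom_def restrict_hom_def del: ppos_tri_mem)
lemma tri_hom_hom:
  assumes f: "is_hom p p' f" and g: "is_hom q q' g"
  shows "is_hom (tri p q) (tri p' q') (tri_hom p q p' q' f g)"
  unfolding tri_hom_def
proof (rule is_hom_restrict)
  fix x assume x: "x \<in> ppos (tri p q)"
  obtain I h where xe: "x = (I,h)" by (cases x)
  show "fst (\<lambda>(I, h). (fst f I, restrict (\<lambda>d'. fst g (h (snd f I d'))) (pdir p' (fst f I))),
         \<lambda>(I, h) (d', e'). (snd f I d', snd g (h (snd f I d')) e')) x \<in> ppos (tri p' q')"
    using x f g by (auto simp: xe dest: is_hom_pos is_hom_dir)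
  fix e assume e: "e \<in> pdir (tri p' q') (fst (\<lambda>(I, h). (fst f I, restrict (\<lambda>d'. fst g (h (snd f I d'))) (pdir p' (fst f I))),
         \<lambda>(I, h) (d', e'). (snd f I d', snd g (h (snd f I d')) e')) x)"
  obtain d' e' where ee: "e = (d',e')" by (cases e)
  show "snd (\<lambda>(I, h). (fst f I, restrict (\<lambda>d'. fst g (h (snd f I d'))) (pdir p' (fst f I))),
         \<lambda>(I, h) (d', e'). (snd f I d', snd g (h (snd f I d')) e')) x e \<in> pdir (tri p q) x"
  proof -
    have I: "I \<in> ppos p" and h: "h \<in> PiE (pdir p I) (\<lambda>_. ppos q)" using x by (auto simp: xe)
    have d': "d' \<in> pdir p' (fst f I)" and e': "e' \<in> pdir q' (fst g (h (snd f I d')))"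
      using e I by (auto simp: xe ee)
    have sd: "snd f I d' \<in> pdir p I" using is_hom_dir[OF f I d'] .
    have hp: "h (snd f I d') \<in> ppos q" using h sd by auto
    show ?thesis using sd is_hom_dir[OF g hp e'] by (simp add: xe ee)
  qed
qed




lemma prod_cases_l3: obtains a b c where "x = ((a,b),c)"
  by (cases x) (metis prod.exhaust)
lemma prod_cases_r3: obtains a b c where "x = (a,(b,c))"
  by (cases x) (metis prod.exhaust)

lemma lunit_inv_hom: "is_hom (tri ypoly s) s (lunit_inv s)"
  unfolding lunit_inv_def by (rule is_hom_restrict) auto
lemma lunit_inv_fst: "(u,h) \<in> ppos (tri ypoly s) \<Longrightarrow> fst (lunit_inv s) (u,h) = h ()"
  by (simp add: lunit_inv_def restrict_hom_def del: ppos_tri_mem)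
lemma lunit_inv_snd: "(u,h) \<in> ppos (tri ypoly s) \<Longrightarrow> e \<in> pdir s (h ()) \<Longrightarrow> snd (lunit_inv s) (u,h) e = ((),e)"
  by (simp add: lunit_inv_def restrict_hom_def del: ppos_tri_mem)

lemma runit_inv_hom: "is_hom (tri s ypoly) s (runit_inv s)"
  unfolding runit_inv_def by (rule is_hom_restrict) auto
lemma runit_inv_fst: "(I,h) \<in> ppos (tri s ypoly) \<Longrightarrow> fst (runit_inv s) (I,h) = I"
  by (simp add: runit_inv_def restrict_hom_def del: ppos_tri_mem)
lemma runit_inv_snd: "(I,h) \<in> ppos (tri s ypoly) \<Longrightarrow> d \<in> pdir s I \<Longrightarrow> snd (runit_inv s) (I,h) d = (d,())"
  by (simp add: runit_inv_def restrict_hom_def del: ppos_tri_mem)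

lemma assoc_fst: "(I,h) \<in> ppos (tri p (tri q r)) \<Longrightarrow> fst (assoc p q r) (I,h) =
   ((I, restrict (\<lambda>d. fst (h d)) (pdir p I)),
                restrict (\<lambda>x. snd (h (fst x)) (snd x))
                         (pdir (tri p q) (I, restrict (\<lambda>d. fst (h d)) (pdir p I))))"
  by (simp add: assoc_def restrict_hom_def del: ppos_tri_mem)
lemma assoc_snd: "(I,h) \<in> ppos (tri p (tri q r)) \<Longrightarrow> x \<in> pdir (tri (tri p q) r) (fst (assoc p q r) (I,h)) \<Longrightarrow>
   snd (assoc p q r) (I,h) x = (fst (fst x), (snd (fst x), snd x))"
  unfolding assoc_def
  by (subst snd_restrict_hom) (auto simp add: fst_restrict_hom simp del: ppos_tri_mem)
lemma assoc_hom: "is_hom (tri p (tri q r)) (tri (tri p q) r) (assoc p q r)"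
  unfolding assoc_def
proof (rule is_hom_restrict, goal_cases)
  case (1 x)
  then obtain I h where xe: "x = (I,h)" and I: "I \<in> ppos p" and h: "h \<in> PiE (pdir p I) (\<lambda>_. ppos (tri q r))"
    by (cases x) auto
  have hq: "\<And>d. d \<in> pdir p I \<Longrightarrow> fst (h d) \<in> ppos q \<and> snd (h d) \<in> PiE (pdir q (fst (h d))) (\<lambda>_. ppos r)
      \<and> (\<forall>e\<in>pdir q (fst (h d)). snd (h d) e \<in> ppos r)"
  proof -
    fix d assume "d \<in> pdir p I"
    then have "h d \<in> ppos (tri q r)" using h by auto
    then show "fst (h d) \<in> ppos q \<and> snd (h d) \<in> PiE (pdir q (fst (h d))) (\<lambda>_. ppos r)
      \<and> (\<forall>e\<in>pdir q (fst (h d)). snd (h d) e \<in> ppos r)"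
      by (cases "h d") auto
  qed
  show ?case using I hq by (auto simp: xe pdir_tri)
next
  case (2 x e)
  then obtain I h where xe: "x = (I,h)" and I: "I \<in> ppos p" and h: "h \<in> PiE (pdir p I) (\<lambda>_. ppos (tri q r))"
    by (cases x) auto
  obtain d e1 e2 where ee: "e = ((d,e1),e2)" by (rule prod_cases_l3)
  show ?case using 2 by (cases "h d") (auto simp: xe ee)
qed

lemma assoc_inv_fst: "((I,g),h) \<in> ppos (tri (tri p q) r) \<Longrightarrow> fst (assoc_inv p q r) ((I,g),h) =
   (I, restrict (\<lambda>d. (g d, restrict (\<lambda>e. h (d, e)) (pdir q (g d)))) (pdir p I))"
  by (simp add: assoc_inv_def restrict_hom_def del: ppos_tri_mem)
lemma assoc_inv_snd: "((I,g),h) \<in> ppos (tri (tri p q) r) \<Longrightarrow> x \<in> pdir (tri p (tri q r)) (fst (assoc_inv p q r) ((I,g),h)) \<Longrightarrow>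
   snd (assoc_inv p q r) ((I,g),h) x = ((fst x, fst (snd x)), snd (snd x))"
  unfolding assoc_inv_def
  by (subst snd_restrict_hom) (auto simp add: fst_restrict_hom simp del: ppos_tri_mem)
lemma assoc_inv_hom: "is_hom (tri (tri p q) r) (tri p (tri q r)) (assoc_inv p q r)"
  unfolding assoc_inv_def
proof (rule is_hom_restrict, goal_cases)
  case (1 x)
  obtain I g h where xe: "x = ((I,g),h)" by (rule prod_cases_l3)
  have I: "I \<in> ppos p" and g: "g \<in> PiE (pdir p I) (\<lambda>_. ppos q)"
     and h: "h \<in> PiE (pdir (tri p q) (I,g)) (\<lambda>_. ppos r)"
    using 1 by (auto simp: xe simp del: pdir_tri_mem)
  show ?case using I g h by (auto simp: xe pdir_tri)
next
  case (2 x e)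
  obtain I g h where xe: "x = ((I,g),h)" by (rule prod_cases_l3)
  obtain d e1 e2 where ee: "e = (d,(e1,e2))" by (rule prod_cases_r3)
  show ?case using 2 by (auto simp: xe ee)
qed

lemma tri_hom_snd': assumes "(I,h) \<in> ppos (tri p q)" "(d',e') \<in> pdir (tri p' q') (fst (tri_hom p q p' q' f g) (I,h))"
  shows "snd (tri_hom p q p' q' f g) (I,h) (d',e') = (snd f I d', snd g (h (snd f I d')) e')"
proof -
  have "d' \<in> pdir p' (fst f I)" "e' \<in> pdir q' (fst g (h (snd f I d')))"
    using assms by (auto simp add: tri_hom_fst simp del: ppos_tri_mem split: if_splits)
  thus ?thesis using assms(1) by (simp add: tri_hom_snd del: ppos_tri_mem)
qed

lemma comp_hom_snd': "I \<in> ppos p \<Longrightarrow> e \<in> pdir r (fst (comp_hom p r g f) I) \<Longrightarrow>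
   snd (comp_hom p r g f) I e = snd f I (snd g (fst f I) e)"
  by (simp add: comp_hom_snd comp_hom_fst)

lemma tpaths_Nil[simp]: "[] \<in> tpaths p t" by (simp add: tpaths_def)
lemma tpaths_Cons[simp]: "(d#ds) \<in> tpaths p t \<longleftrightarrow> d \<in> pdir p (t []) \<and> ds \<in> tpaths p (\<lambda>es. t (d#es))"
  unfolding tpaths_def by (auto simp: less_Suc_eq_0_disj)
lemma tpaths_append: "(ds@es) \<in> tpaths p t \<longleftrightarrow> ds \<in> tpaths p t \<and> es \<in> tpaths p (\<lambda>es. t (ds@es))"
  by (induction ds arbitrary: t) auto

lemma cofree_mem: "t \<in> ppos (cofree p) \<longleftrightarrow> (\<forall>ds \<in> tpaths p t. t ds \<in> ppos p) \<and> (\<forall>ds. ds \<notin> tpaths p t \<longrightarrow> t ds = undefined)"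
  by (simp add: cofree_def)
lemma pdir_cofree[simp]: "pdir (cofree p) t = tpaths p t" by (simp add: cofree_def)

lemma cofree_sub: "t \<in> ppos (cofree p) \<Longrightarrow> ds \<in> tpaths p t \<Longrightarrow> (\<lambda>es. t (ds@es)) \<in> ppos (cofree p)"
  unfolding cofree_mem by (auto simp: tpaths_append)

lemma cofree_root: "t \<in> ppos (cofree p) \<Longrightarrow> t [] \<in> ppos p"
  unfolding cofree_mem by auto

lemma cofree_eps_hom: "is_hom (cofree p) ypoly (cofree_eps p)"
  unfolding cofree_eps_def by (rule is_hom_restrict) auto
lemma cofree_eps_fst: "t \<in> ppos (cofree p) \<Longrightarrow> fst (cofree_eps p) t = ()"
  by (simp add: cofree_eps_def restrict_hom_def)
lemma cofree_eps_snd: "t \<in> ppos (cofree p) \<Longrightarrow> snd (cofree_eps p) t u = []"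
  by (simp add: cofree_eps_def restrict_hom_def)

lemma cofree_delta_hom: "is_hom (cofree p) (tri (cofree p) (cofree p)) (cofree_delta p)"
  unfolding cofree_delta_def by (rule is_hom_restrict) (auto simp: cofree_sub tpaths_append)
lemma cofree_delta_fst: "t \<in> ppos (cofree p) \<Longrightarrow> fst (cofree_delta p) t = (t, restrict (\<lambda>ds es. t (ds @ es)) (tpaths p t))"
  by (simp add: cofree_delta_def restrict_hom_def)
lemma cofree_delta_snd: "t \<in> ppos (cofree p) \<Longrightarrow> ds \<in> tpaths p t \<Longrightarrow> es \<in> tpaths p (\<lambda>es. t (ds@es)) \<Longrightarrow>
   snd (cofree_delta p) t (ds,es) = ds @ es"
  by (simp add: cofree_delta_def restrict_hom_def)

lemma cofree_proj_hom: "is_hom (cofree p) p (cofree_proj p)"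
  unfolding cofree_proj_def by (rule is_hom_restrict) (auto simp: cofree_root)
lemma cofree_proj_fst: "t \<in> ppos (cofree p) \<Longrightarrow> fst (cofree_proj p) t = t []"
  by (simp add: cofree_proj_def restrict_hom_def)
lemma cofree_proj_snd: "t \<in> ppos (cofree p) \<Longrightarrow> d \<in> pdir p (t []) \<Longrightarrow> snd (cofree_proj p) t d = [d]"
  by (simp add: cofree_proj_def restrict_hom_def)




locale comon =
  fixes c :: "('j,'e) poly" and eps :: "('j \<Rightarrow> unit) \<times> ('j \<Rightarrow> unit \<Rightarrow> 'e)"
    and delta :: "('j \<Rightarrow> 'j \<times> ('e \<Rightarrow> 'j)) \<times> ('j \<Rightarrow> 'e \<times> 'e \<Rightarrow> 'e)"
  assumes cm: "comonoid c eps delta"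
begin

definition cod where "cod j e = snd (fst delta j) e"
definition dc where "dc j e1 e2 = snd delta j (e1,e2)"
definition ec where "ec j = snd eps j ()"

lemma eps_hom: "is_hom c ypoly eps" using cm by (simp add: comonoid_def)
lemma delta_hom: "is_hom c (tri c c) delta" using cm by (simp add: comonoid_def)

lemma ec_mem: "j \<in> ppos c \<Longrightarrow> ec j \<in> pdir c j"
  using is_hom_dir[OF eps_hom, of j "()"] by (simp add: ec_def)

lemma delta_pos: "j \<in> ppos c \<Longrightarrow> fst delta j \<in> ppos (tri c c)"
  by (rule is_hom_pos[OF delta_hom])

lemma delta_fst_fst: assumes j: "j \<in> ppos c" shows "fst (fst delta j) = j"
proof -
  obtain j' h where dj: "fst delta j = (j',h)" by (cases "fst delta j")
  have mem: "(j',h) \<in> ppos (tri c c)" using delta_pos[OF j] dj by simp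
  hence j': "j' \<in> ppos c" by simp
  have T: "is_hom (tri c c) (tri c ypoly) (tri_hom c c c ypoly (id_hom c) eps)"
    by (rule tri_hom_hom[OF id_hom_hom eps_hom])
  have Tm: "fst (tri_hom c c c ypoly (id_hom c) eps) (j',h) \<in> ppos (tri c ypoly)"
    by (rule is_hom_pos[OF T mem])
  have Tf: "fst (tri_hom c c c ypoly (id_hom c) eps) (j',h) = (j', restrict (\<lambda>d'. fst eps (h d')) (pdir c j'))"
    using mem j' by (simp add: tri_hom_fst id_hom_fst id_hom_snd del: ppos_tri_mem cong: restrict_cong)
  have "fst (comp_hom c c (runit_inv c)
       (comp_hom c (tri c ypoly) (tri_hom c c c ypoly (id_hom c) eps) delta)) j = fst (id_hom c) j"
    using cm by (simp add: comonoid_def)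
  hence "fst (runit_inv c) (fst (tri_hom c c c ypoly (id_hom c) eps) (j',h)) = j"
    using j by (simp add: comp_hom_fst id_hom_fst dj)
  thus ?thesis using Tm Tf dj by (simp add: runit_inv_fst del: ppos_tri_mem)
qed

lemma cod_fun: "cod j = snd (fst delta j)" by (rule ext) (simp add: cod_def)

lemma delta_fst: assumes j: "j \<in> ppos c" shows "fst delta j = (j, cod j)"
  using delta_fst_fst[OF j] by (metis cod_fun prod.collapse)

lemma cod_PiE: "j \<in> ppos c \<Longrightarrow> cod j \<in> PiE (pdir c j) (\<lambda>_. ppos c)"
  using delta_pos[of j] delta_fst[of j] by simp

lemma cod_mem: "j \<in> ppos c \<Longrightarrow> e \<in> pdir c j \<Longrightarrow> cod j e \<in> ppos c"
  using cod_PiE[of j] by auto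

lemma dc_mem: "j \<in> ppos c \<Longrightarrow> e1 \<in> pdir c j \<Longrightarrow> e2 \<in> pdir c (cod j e1) \<Longrightarrow> dc j e1 e2 \<in> pdir c j"
  using is_hom_dir[OF delta_hom, of j "(e1,e2)"] delta_fst[of j] by (simp add: dc_def)

lemma delta_mem': "j \<in> ppos c \<Longrightarrow> (j, cod j) \<in> ppos (tri c c)"
  using delta_pos[of j] delta_fst[of j] by simp

lemma left_counit: assumes j: "j \<in> ppos c"
  shows "cod j (ec j) = j" "\<And>e. e \<in> pdir c j \<Longrightarrow> dc j (ec j) e = e"
proof -
  let ?T = "tri_hom c c ypoly c eps (id_hom c)"
  let ?L = "comp_hom c c (lunit_inv c) (comp_hom c (tri ypoly c) ?T delta)"
  have H: "?L = id_hom c" using cm by (simp add: comonoid_def)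
  have mem: "(j, cod j) \<in> ppos (tri c c)" by (rule delta_mem'[OF j])
  have T: "is_hom (tri c c) (tri ypoly c) ?T"
    by (rule tri_hom_hom[OF eps_hom id_hom_hom])
  have Tm: "fst ?T (j, cod j) \<in> ppos (tri ypoly c)"
    by (rule is_hom_pos[OF T mem])
  have Tf: "fst ?T (j, cod j) = ((), restrict (\<lambda>d'. cod j (ec j)) {()})"
    using mem j ec_mem[OF j] cod_mem[OF j] by (simp add: tri_hom_fst id_hom_fst ec_def del: ppos_tri_mem cong: restrict_cong)
  have "fst ?L j = fst (id_hom c) j" using H by simp
  hence "fst (lunit_inv c) (fst ?T (j, cod j)) = j"
    using j by (simp add: comp_hom_fst id_hom_fst delta_fst)
  thus cj: "cod j (ec j) = j" using Tm Tf by (simp add: lunit_inv_fst del: ppos_tri_mem)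
  fix e assume e: "e \<in> pdir c j"
  have "snd ?L j e = snd (id_hom c) j e" using H by simp
  also have "\<dots> = e" using j e by (simp add: id_hom_snd)
  also have "snd ?L j e = snd (comp_hom c (tri ypoly c) ?T delta) j (snd (lunit_inv c) (fst ?T (j, cod j)) e)"
    using j e Tm Tf cj by (simp add: comp_hom_fst comp_hom_snd delta_fst lunit_inv_fst del: ppos_tri_mem)
  also have "snd (lunit_inv c) (fst ?T (j, cod j)) e = ((),e)"
    using Tm Tf cj e by (simp add: lunit_inv_snd del: ppos_tri_mem)
  also have "snd (comp_hom c (tri ypoly c) ?T delta) j ((),e) = snd delta j (snd ?T (j, cod j) ((),e))"
    using j e Tf cj by (simp add: comp_hom_snd delta_fst)
  also have "snd ?T (j, cod j) ((),e) = (ec j, e)"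
    using mem e cj j ec_mem[OF j] by (subst tri_hom_snd) (simp_all add: id_hom_snd id_hom_fst ec_def del: ppos_tri_mem)
  finally show "dc j (ec j) e = e" by (simp add: dc_def)
qed

lemma right_counit: assumes j: "j \<in> ppos c" and e: "e \<in> pdir c j"
  shows "dc j e (ec (cod j e)) = e"
proof -
  let ?T = "tri_hom c c c ypoly (id_hom c) eps"
  let ?L = "comp_hom c c (runit_inv c) (comp_hom c (tri c ypoly) ?T delta)"
  have H: "?L = id_hom c" using cm by (simp add: comonoid_def)
  have mem: "(j, cod j) \<in> ppos (tri c c)" by (rule delta_mem'[OF j])
  have T: "is_hom (tri c c) (tri c ypoly) ?T"
    by (rule tri_hom_hom[OF id_hom_hom eps_hom])
  have Tm: "fst ?T (j, cod j) \<in> ppos (tri c ypoly)"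
    by (rule is_hom_pos[OF T mem])
  have Tf: "fst ?T (j, cod j) = (j, restrict (\<lambda>d'. ()) (pdir c j))"
    using mem j by (simp add: tri_hom_fst id_hom_fst id_hom_snd del: ppos_tri_mem cong: restrict_cong)
  have "snd ?L j e = snd (id_hom c) j e" using H by simp
  also have "\<dots> = e" using j e by (simp add: id_hom_snd)
  also have "snd ?L j e = snd (comp_hom c (tri c ypoly) ?T delta) j (snd (runit_inv c) (fst ?T (j, cod j)) e)"
    using j e Tm Tf by (simp add: comp_hom_fst comp_hom_snd delta_fst runit_inv_fst del: ppos_tri_mem)
  also have "snd (runit_inv c) (fst ?T (j, cod j)) e = (e,())"
    using Tm Tf e by (simp add: runit_inv_snd del: ppos_tri_mem)
  also have "snd (comp_hom c (tri c ypoly) ?T delta) j (e,()) = snd delta j (snd ?T (j, cod j) (e,()))"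
    using j e Tf by (simp add: comp_hom_snd delta_fst)
  also have "snd ?T (j, cod j) (e,()) = (e, ec (cod j e))"
    using mem e j by (subst tri_hom_snd) (simp_all add: id_hom_snd id_hom_fst ec_def del: ppos_tri_mem)
  finally show ?thesis by (simp add: dc_def)
qed

lemma coassoc: assumes j: "j \<in> ppos c" and e1: "e1 \<in> pdir c j" and e2: "e2 \<in> pdir c (cod j e1)"
  shows "cod j (dc j e1 e2) = cod (cod j e1) e2"
    "\<And>e3. e3 \<in> pdir c (cod (cod j e1) e2) \<Longrightarrow> dc j (dc j e1 e2) e3 = dc j e1 (dc (cod j e1) e2 e3)"
proof -
  let ?A = "tri_hom c c (tri c c) c delta (id_hom c)"
  let ?B = "tri_hom c c c (tri c c) (id_hom c) delta"
  have H: "comp_hom c (tri (tri c c) c) ?A delta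
     = comp_hom c (tri (tri c c) c) (assoc c c c) (comp_hom c (tri c (tri c c)) ?B delta)"
    using cm by (simp add: comonoid_def)
  have mem: "(j, cod j) \<in> ppos (tri c c)" by (rule delta_mem'[OF j])
  have Ah: "is_hom (tri c c) (tri (tri c c) c) ?A" by (rule tri_hom_hom[OF delta_hom id_hom_hom])
  have Bh: "is_hom (tri c c) (tri c (tri c c)) ?B" by (rule tri_hom_hom[OF id_hom_hom delta_hom])
  have Am: "fst ?A (j, cod j) \<in> ppos (tri (tri c c) c)" by (rule is_hom_pos[OF Ah mem])
  have Bm: "fst ?B (j, cod j) \<in> ppos (tri c (tri c c))" by (rule is_hom_pos[OF Bh mem])
  have Af: "fst ?A (j, cod j) = ((j, cod j), restrict (\<lambda>d'. cod j (snd delta j d')) (pdir (tri c c) (j, cod j)))"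
  proof -
    have "\<And>d'. d' \<in> pdir (tri c c) (j, cod j) \<Longrightarrow> cod j (snd delta j d') \<in> ppos c"
      using is_hom_dir[OF delta_hom j] delta_fst[OF j] cod_mem[OF j] by (auto)
    then show ?thesis
      using mem j by (simp add: tri_hom_fst id_hom_fst delta_fst del: ppos_tri_mem cong: restrict_cong)
  qed
  have Bf: "fst ?B (j, cod j) = (j, restrict (\<lambda>e. (cod j e, cod (cod j e))) (pdir c j))"
    using mem j cod_mem[OF j] by (simp add: tri_hom_fst id_hom_fst id_hom_snd delta_fst del: ppos_tri_mem cong: restrict_cong)
  have rc: "restrict (\<lambda>d. fst (restrict (\<lambda>e. (cod j e, cod (cod j e))) (pdir c j) d)) (pdir c j) = cod j"
    using cod_PiE[OF j] by (simp add: PiE_restrict cong: restrict_cong)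
  have asf: "fst (assoc c c c) (fst ?B (j, cod j)) =
     ((j, cod j), restrict (\<lambda>x. cod (cod j (fst x)) (snd x)) (pdir (tri c c) (j, cod j)))"
  proof -
    have rcj: "restrict (cod j) (pdir c j) = cod j" using cod_PiE[OF j] by (simp add: PiE_restrict)
    have "fst (assoc c c c) (fst ?B (j, cod j)) = ((j, cod j), restrict (\<lambda>x. snd (restrict (\<lambda>e. (cod j e, cod (cod j e))) (pdir c j) (fst x)) (snd x)) (pdir (tri c c) (j, cod j)))"
      unfolding Bf by (subst assoc_fst[OF Bm[unfolded Bf]]) (simp only: rc)
    also have "\<dots> = ((j, cod j), restrict (\<lambda>x. cod (cod j (fst x)) (snd x)) (pdir (tri c c) (j, cod j)))"
      by (rule arg_cong[where f="\<lambda>z. ((j, cod j), z)"], rule restrict_cong) (auto simp: pdir_tri)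
    finally show ?thesis .
  qed
  from H[unfolded comp_hom_eq_iff] j have HH:
    "fst ?A (fst delta j) = fst (assoc c c c) (fst (comp_hom c (tri c (tri c c)) ?B delta) j) \<and>
      (\<forall>e\<in>pdir (tri (tri c c) c) (fst ?A (fst delta j)).
          snd delta j (snd ?A (fst delta j) e) =
          snd (comp_hom c (tri c (tri c c)) ?B delta) j (snd (assoc c c c) (fst (comp_hom c (tri c (tri c c)) ?B delta) j) e))"
    by blast
  have HP: "fst ?A (j, cod j) = fst (assoc c c c) (fst ?B (j, cod j))"
    using HH j by (simp add: comp_hom_fst delta_fst)
  have e12: "(e1,e2) \<in> pdir (tri c c) (j, cod j)" using e1 e2 by simp
  from HP[unfolded Af asf] have "restrict (\<lambda>d'. cod j (snd delta j d')) (pdir (tri c c) (j, cod j)) (e1,e2)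
      = restrict (\<lambda>x. cod (cod j (fst x)) (snd x)) (pdir (tri c c) (j, cod j)) (e1,e2)" by simp
  thus c1: "cod j (dc j e1 e2) = cod (cod j e1) e2" using e12 by (simp add: dc_def del: pdir_tri_mem)
  fix e3 assume e3: "e3 \<in> pdir c (cod (cod j e1) e2)"
  let ?x = "((e1,e2),e3)"
  have xm: "?x \<in> pdir (tri (tri c c) c) (fst ?A (j, cod j))"
    using e1 e2 e3 c1 by (simp add: Af dc_def)
  have L: "snd ?A (j, cod j) ?x = (dc j e1 e2, e3)"
    using mem e1 e2 e3 c1 j by (subst tri_hom_snd) (simp_all add: id_hom_snd id_hom_fst delta_fst dc_def cod_mem dc_mem del: ppos_tri_mem)
  have xm2: "?x \<in> pdir (tri (tri c c) c) (fst (assoc c c c) (fst ?B (j, cod j)))" using xm HP by simp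
  have R1: "snd (assoc c c c) (fst ?B (j, cod j)) ?x = (e1,(e2,e3))"
    using Bm xm2 unfolding Bf by (subst assoc_snd) simp_all
  have R2m: "(e1,(e2,e3)) \<in> pdir (tri c (tri c c)) (fst ?B (j, cod j))"
    using e1 e2 e3 by (simp add: Bf)
  have R2: "snd (comp_hom c (tri c (tri c c)) ?B delta) j (e1,(e2,e3)) = snd delta j (snd ?B (j, cod j) (e1,(e2,e3)))"
    using j R2m by (simp add: comp_hom_snd delta_fst)
  have R3: "snd ?B (j, cod j) (e1,(e2,e3)) = (e1, dc (cod j e1) e2 e3)"
    using mem e1 e2 e3 j by (subst tri_hom_snd) (simp_all add: id_hom_snd id_hom_fst delta_fst dc_def cod_mem del: ppos_tri_mem)
  from HH xm j have "snd delta j (snd ?A (j, cod j) ?x) =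
          snd (comp_hom c (tri c (tri c c)) ?B delta) j (snd (assoc c c c) (fst ?B (j, cod j)) ?x)"
    by (simp add: comp_hom_fst delta_fst)
  thus "dc j (dc j e1 e2) e3 = dc j e1 (dc (cod j e1) e2 e3)"
    unfolding L R1 R2 R3 by (simp add: dc_def)
qed

end



locale hctx = comon c eps delta
  for c :: "('j,'e) poly" and eps :: "('j \<Rightarrow> unit) \<times> ('j \<Rightarrow> unit \<Rightarrow> 'e)"
    and delta :: "('j \<Rightarrow> 'j \<times> ('e \<Rightarrow> 'j)) \<times> ('j \<Rightarrow> 'e \<times> 'e \<Rightarrow> 'e)" +
  fixes p :: "('i,'d) poly" and s :: "('k,'f) poly" and Psi
  assumes Psih: "is_hom (tri s c) (tri (cofree p) s) Psi"
begin

definition T where "T x = fst (fst Psi x)"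
definition G where "G x = snd (fst Psi x)"
definition B where "B x ds a = snd Psi x (ds, a)"
definition nxt where "nxt x ds = (G x ds, restrict (\<lambda>a. cod (snd x (fst (B x ds a))) (snd (B x ds a))) (pdir s (G x ds)))"

lemma Psi_fst: "fst Psi x = (T x, G x)" by (simp add: T_def G_def)

lemma Psi_pos: assumes x: "x \<in> ppos (tri s c)"
  shows "T x \<in> ppos (cofree p)" "G x \<in> PiE (tpaths p (T x)) (\<lambda>_. ppos s)"
  using is_hom_pos[OF Psih x] by (simp_all add: Psi_fst)

lemma G_mem: "x \<in> ppos (tri s c) \<Longrightarrow> ds \<in> tpaths p (T x) \<Longrightarrow> G x ds \<in> ppos s"
  using Psi_pos(2)[of x] by auto

lemma B_mem: assumes x: "x \<in> ppos (tri s c)" and ds: "ds \<in> tpaths p (T x)" and a: "a \<in> pdir s (G x ds)"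
  shows "B x ds a \<in> pdir (tri s c) x"
  using is_hom_dir[OF Psih x, of "(ds,a)"] ds a by (simp add: Psi_fst B_def)

lemma B_mem': assumes x: "x = (I,f)" "x \<in> ppos (tri s c)" and ds: "ds \<in> tpaths p (T x)" and a: "a \<in> pdir s (G x ds)"
  shows "fst (B x ds a) \<in> pdir s I" "snd (B x ds a) \<in> pdir c (f (fst (B x ds a)))"
  using B_mem[OF x(2) ds a] x(1) by (cases "B x ds a"; simp)+

lemma nxt_mem: assumes x: "x \<in> ppos (tri s c)" and ds: "ds \<in> tpaths p (T x)"
  shows "nxt x ds \<in> ppos (tri s c)"
proof -
  obtain I f where xe: "x = (I,f)" by (cases x)
  have I: "I \<in> ppos s" and f: "f \<in> PiE (pdir s I) (\<lambda>_. ppos c)" using x by (auto simp: xe)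
  show ?thesis unfolding nxt_def using G_mem[OF x ds] B_mem'[OF xe x ds] f
    by (auto intro!: cod_mem simp: xe)
qed

definition CU where "CU \<longleftrightarrow> (\<forall>x\<in>ppos (tri s c). G x [] = fst x \<and> (\<forall>a\<in>pdir s (fst x). B x [] a = (a, ec (snd x a))))"

lemma EqU_iff:
  "comp_hom (tri s c) s (lunit_inv s) (comp_hom (tri s c) (tri ypoly s) (tri_hom (cofree p) s ypoly s (cofree_eps p) (id_hom s)) Psi)
   = comp_hom (tri s c) s (runit_inv s) (tri_hom s c s ypoly (id_hom s) eps) \<longleftrightarrow> CU"
proof -
  let ?U = "tri_hom (cofree p) s ypoly s (cofree_eps p) (id_hom s)"
  let ?V = "tri_hom s c s ypoly (id_hom s) eps"
  let ?L = "comp_hom (tri s c) s (lunit_inv s) (comp_hom (tri s c) (tri ypoly s) ?U Psi)"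
  let ?R = "comp_hom (tri s c) s (runit_inv s) ?V"
  have Uh: "is_hom (tri (cofree p) s) (tri ypoly s) ?U" by (rule tri_hom_hom[OF cofree_eps_hom id_hom_hom])
  have Vh: "is_hom (tri s c) (tri s ypoly) ?V" by (rule tri_hom_hom[OF id_hom_hom eps_hom])
  have Lh: "is_hom (tri s c) s ?L" by (rule comp_hom_hom[OF comp_hom_hom[OF Psih Uh] lunit_inv_hom])
  have Rh: "is_hom (tri s c) s ?R" by (rule comp_hom_hom[OF Vh runit_inv_hom])
  have pw: "(fst ?L x = fst ?R x \<and> (\<forall>e\<in>pdir s (fst ?L x). snd ?L x e = snd ?R x e)) \<longleftrightarrow>
     (G x [] = fst x \<and> (\<forall>a\<in>pdir s (fst x). B x [] a = (a, ec (snd x a))))"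
    if x: "x \<in> ppos (tri s c)" for x
  proof -
    obtain I f where xe: "x = (I,f)" by (cases x)
    have I: "I \<in> ppos s" and f: "f \<in> PiE (pdir s I) (\<lambda>_. ppos c)" using x by (auto simp: xe)
    have Tm: "T x \<in> ppos (cofree p)" and Gm: "G x \<in> PiE (tpaths p (T x)) (\<lambda>_. ppos s)" using Psi_pos[OF x] by auto
    have G0: "G x [] \<in> ppos s" using G_mem[OF x] by simp
    have tg: "(T x, G x) \<in> ppos (tri (cofree p) s)" using Tm Gm by simp
    have Uf: "fst ?U (T x, G x) = ((), restrict (\<lambda>_. G x []) {()})"
      using tg Tm G0 by (simp add: tri_hom_fst cofree_eps_fst cofree_eps_snd id_hom_fst del: ppos_tri_mem)
    have Um: "fst ?U (T x, G x) \<in> ppos (tri ypoly s)" using is_hom_pos[OF Uh tg] .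
    have Lf: "fst ?L x = G x []"
      using x Um Uf by (simp add: comp_hom_fst Psi_fst lunit_inv_fst del: ppos_tri_mem)
    have Vf: "fst ?V x = (I, restrict (\<lambda>_. ()) (pdir s I))"
      using x I by (simp add: xe tri_hom_fst id_hom_fst id_hom_snd del: ppos_tri_mem cong: restrict_cong)
    have Vm: "fst ?V x \<in> ppos (tri s ypoly)" using is_hom_pos[OF Vh x] .
    have Rf: "fst ?R x = I"
      using x Vm Vf by (simp add: comp_hom_fst runit_inv_fst del: ppos_tri_mem)
    have Ls: "snd ?L x a = B x [] a" if a: "a \<in> pdir s (G x [])" for a
    proof -
      have "snd ?L x a = snd (comp_hom (tri s c) (tri ypoly s) ?U Psi) x (snd (lunit_inv s) (fst ?U (T x, G x)) a)"
        using x a Lf by (simp add: comp_hom_fst comp_hom_snd Psi_fst)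
      also have "snd (lunit_inv s) (fst ?U (T x, G x)) a = ((), a)"
        using Um Uf a by (simp add: lunit_inv_snd del: ppos_tri_mem)
      also have "snd (comp_hom (tri s c) (tri ypoly s) ?U Psi) x ((), a) = snd Psi x (snd ?U (T x, G x) ((),a))"
        using x a Uf by (simp add: comp_hom_snd Psi_fst)
      also have "snd ?U (T x, G x) ((),a) = ([], a)"
        using tg Tm a G0 by (subst tri_hom_snd) (simp_all add: cofree_eps_fst cofree_eps_snd id_hom_fst id_hom_snd del: ppos_tri_mem)
      finally show ?thesis by (simp add: B_def)
    qed
    have Rs: "snd ?R x a = (a, ec (f a))" if a: "a \<in> pdir s I" for a
    proof -
      have "snd ?R x a = snd ?V x (snd (runit_inv s) (fst ?V x) a)"
        by (rule comp_hom_snd[OF x]) (use a Rf x in \<open>simp add: comp_hom_fst\<close>)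
      also have "snd (runit_inv s) (fst ?V x) a = (a, ())"
        using Vm Vf a by (simp add: runit_inv_snd del: ppos_tri_mem)
      also have "snd ?V x (a, ()) = (a, ec (f a))"
        using x a I f by (simp only: xe, subst tri_hom_snd) (auto simp add: id_hom_fst id_hom_snd ec_def simp del: ppos_tri_mem)
      finally show ?thesis .
    qed
    show ?thesis using Lf Rf Ls Rs by (auto simp: xe)
  qed
  show ?thesis unfolding hom_eq_iff[OF Lh Rh] CU_def using pw by blast
qed

end



lemma restrict_eq_iff: "restrict f A = restrict g A \<longleftrightarrow> (\<forall>x\<in>A. f x = g x)"
  by (metis restrict_apply' restrict_ext)

context hctx
begin

abbreviation "cp \<equiv> cofree p"
abbreviation "S1 \<equiv> tri_hom s c s (tri c c) (id_hom s) delta"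
abbreviation "S2 \<equiv> assoc s c c"
abbreviation "S3 \<equiv> tri_hom (tri s c) c (tri cp s) c Psi (id_hom c)"
abbreviation "S4 \<equiv> assoc_inv cp s c"
abbreviation "S5 \<equiv> tri_hom cp (tri s c) cp (tri cp s) (id_hom cp) Psi"
abbreviation "S6 \<equiv> assoc cp cp s"
abbreviation "R2 \<equiv> comp_hom (tri s c) (tri (tri s c) c) S2 S1"
abbreviation "R3 \<equiv> comp_hom (tri s c) (tri (tri cp s) c) S3 R2"
abbreviation "R4 \<equiv> comp_hom (tri s c) (tri cp (tri s c)) S4 R3"
abbreviation "R5 \<equiv> comp_hom (tri s c) (tri cp (tri cp s)) S5 R4"
abbreviation "RHS \<equiv> comp_hom (tri s c) (tri (tri cp cp) s) S6 R5"
abbreviation "XX \<equiv> tri_hom cp s (tri cp cp) s (cofree_delta p) (id_hom s)"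
abbreviation "LHS \<equiv> comp_hom (tri s c) (tri (tri cp cp) s) XX Psi"

lemma S1h: "is_hom (tri s c) (tri s (tri c c)) S1" by (rule tri_hom_hom[OF id_hom_hom delta_hom])
lemma S2h: "is_hom (tri s (tri c c)) (tri (tri s c) c) S2" by (rule assoc_hom)
lemma S3h: "is_hom (tri (tri s c) c) (tri (tri cp s) c) S3" by (rule tri_hom_hom[OF Psih id_hom_hom])
lemma S4h: "is_hom (tri (tri cp s) c) (tri cp (tri s c)) S4" by (rule assoc_inv_hom)
lemma S5h: "is_hom (tri cp (tri s c)) (tri cp (tri cp s)) S5" by (rule tri_hom_hom[OF id_hom_hom Psih])
lemma S6h: "is_hom (tri cp (tri cp s)) (tri (tri cp cp) s) S6" by (rule assoc_hom)
lemma R2h: "is_hom (tri s c) (tri (tri s c) c) R2" by (rule comp_hom_hom[OF S1h S2h])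
lemma R3h: "is_hom (tri s c) (tri (tri cp s) c) R3" by (rule comp_hom_hom[OF R2h S3h])
lemma R4h: "is_hom (tri s c) (tri cp (tri s c)) R4" by (rule comp_hom_hom[OF R3h S4h])
lemma R5h: "is_hom (tri s c) (tri cp (tri cp s)) R5" by (rule comp_hom_hom[OF R4h S5h])
lemma RHSh: "is_hom (tri s c) (tri (tri cp cp) s) RHS" by (rule comp_hom_hom[OF R5h S6h])
lemma XXh: "is_hom (tri cp s) (tri (tri cp cp) s) XX" by (rule tri_hom_hom[OF cofree_delta_hom id_hom_hom])
lemma LHSh: "is_hom (tri s c) (tri (tri cp cp) s) LHS" by (rule comp_hom_hom[OF Psih XXh])

definition comb where "comb x ds es a = (let b2 = B (nxt x ds) es a; b1 = B x ds (fst b2) in (fst b1, dc (snd x (fst b1)) (snd b1) (snd b2)))"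

definition subt where "subt t ds = (\<lambda>es. t (ds @ es))"

context
  fixes x I f
  assumes xe: "x = (I,f)" and x: "x \<in> ppos (tri s c)"
begin

lemma I: "I \<in> ppos s" and f: "f \<in> PiE (pdir s I) (\<lambda>_. ppos c)" using x by (auto simp: xe)
lemma fm: "a \<in> pdir s I \<Longrightarrow> f a \<in> ppos c" using f by auto

lemma P1: "fst S1 x = (I, restrict (\<lambda>a. (f a, cod (f a))) (pdir s I))"
  using x I fm by (simp add: xe tri_hom_fst id_hom_fst id_hom_snd delta_fst del: ppos_tri_mem cong: restrict_cong)

lemma P2: "fst R2 x = ((I,f), restrict (\<lambda>z. cod (f (fst z)) (snd z)) (pdir (tri s c) (I,f)))"
proof -
  have m: "fst S1 x \<in> ppos (tri s (tri c c))" by (rule is_hom_pos[OF S1h x])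
  have rf: "restrict (\<lambda>d. fst (restrict (\<lambda>a. (f a, cod (f a))) (pdir s I) d)) (pdir s I) = f"
    using f by (simp add: PiE_restrict cong: restrict_cong)
  have "fst R2 x = fst S2 (fst S1 x)" using x by (simp add: comp_hom_fst)
  also have "\<dots> = ((I, f), restrict (\<lambda>z. snd (restrict (\<lambda>a. (f a, cod (f a))) (pdir s I) (fst z)) (snd z)) (pdir (tri s c) (I, f)))"
    unfolding P1 by (subst assoc_fst[OF m[unfolded P1]]) (simp only: rf)
  also have "\<dots> = ((I,f), restrict (\<lambda>z. cod (f (fst z)) (snd z)) (pdir (tri s c) (I,f)))"
    by (rule arg_cong[where f="\<lambda>z. ((I, f), z)"], rule restrict_cong) (auto simp: pdir_tri)
  finally show ?thesis .
qed

lemma P3: "fst R3 x = ((T x, G x), restrict (\<lambda>z. cod (f (fst (snd Psi x z))) (snd (snd Psi x z))) (pdir (tri cp s) (T x, G x)))"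
proof -
  have m: "fst R2 x \<in> ppos (tri (tri s c) c)" by (rule is_hom_pos[OF R2h x])
  have "fst R3 x = fst S3 (fst R2 x)" using x by (simp add: comp_hom_fst)
  also have "\<dots> = ((T x, G x), restrict (\<lambda>z. fst (id_hom c) (restrict (\<lambda>z. cod (f (fst z)) (snd z)) (pdir (tri s c) (I,f)) (snd Psi x z))) (pdir (tri cp s) (T x, G x)))"
    using m unfolding P2 by (subst tri_hom_fst) (simp_all add: Psi_fst xe)
  also have "\<dots> = ((T x, G x), restrict (\<lambda>z. cod (f (fst (snd Psi x z))) (snd (snd Psi x z))) (pdir (tri cp s) (T x, G x)))"
  proof (rule arg_cong[where f="\<lambda>z. ((T x, G x), z)"], rule restrict_ext)
    fix z assume z: "z \<in> pdir (tri cp s) (T x, G x)"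
    have bm: "snd Psi x z \<in> pdir (tri s c) (I,f)" using is_hom_dir[OF Psih x, of z] z by (simp add: Psi_fst xe)
    obtain a0 e1 where be: "snd Psi x z = (a0,e1)" by (cases "snd Psi x z")
    have "a0 \<in> pdir s I" "e1 \<in> pdir c (f a0)" using bm be by auto
    thus "fst (id_hom c) (restrict (\<lambda>z. cod (f (fst z)) (snd z)) (pdir (tri s c) (I,f)) (snd Psi x z)) = cod (f (fst (snd Psi x z))) (snd (snd Psi x z))"
      using bm be by (simp add: id_hom_fst cod_mem fm)
  qed
  finally show ?thesis .
qed

lemma P4: "fst R4 x = (T x, restrict (nxt x) (tpaths p (T x)))"
proof -
  have m: "fst R3 x \<in> ppos (tri (tri cp s) c)" by (rule is_hom_pos[OF R3h x])
  have "fst R4 x = fst S4 (fst R3 x)" using x by (simp add: comp_hom_fst)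
  also have "\<dots> = (T x, restrict (\<lambda>ds. (G x ds, restrict (\<lambda>a. restrict (\<lambda>z. cod (f (fst (snd Psi x z))) (snd (snd Psi x z))) (pdir (tri cp s) (T x, G x)) (ds,a)) (pdir s (G x ds)))) (tpaths p (T x)))"
    using m unfolding P3 by (subst assoc_inv_fst) simp_all
  also have "\<dots> = (T x, restrict (nxt x) (tpaths p (T x)))"
    by (rule arg_cong[where f="\<lambda>z. (T x, z)"], rule restrict_ext)
       (auto simp: nxt_def B_def xe intro!: restrict_ext)
  finally show ?thesis .
qed

lemma P5: "fst R5 x = (T x, restrict (\<lambda>ds. fst Psi (nxt x ds)) (tpaths p (T x)))"
proof -
  have m: "fst R4 x \<in> ppos (tri cp (tri s c))" by (rule is_hom_pos[OF R4h x])
  have Tm: "T x \<in> ppos cp" using Psi_pos[OF x] by simp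
  have "fst R5 x = fst S5 (fst R4 x)" using x by (simp add: comp_hom_fst)
  also have "\<dots> = (T x, restrict (\<lambda>ds. fst Psi (restrict (nxt x) (tpaths p (T x)) (snd (id_hom cp) (T x) ds))) (pdir cp (fst (id_hom cp) (T x))))"
    using m unfolding P4 by (subst tri_hom_fst) (simp_all add: id_hom_fst Tm)
  also have "\<dots> = (T x, restrict (\<lambda>ds. fst Psi (nxt x ds)) (tpaths p (T x)))"
    using Tm by (auto simp: id_hom_fst id_hom_snd intro!: restrict_ext)
  finally show ?thesis .
qed

lemma P6: "fst RHS x = ((T x, restrict (\<lambda>ds. T (nxt x ds)) (tpaths p (T x))),
     restrict (\<lambda>z. G (nxt x (fst z)) (snd z)) (pdir (tri cp cp) (T x, restrict (\<lambda>ds. T (nxt x ds)) (tpaths p (T x)))))"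
proof -
  have m: "fst R5 x \<in> ppos (tri cp (tri cp s))" by (rule is_hom_pos[OF R5h x])
  have r1: "restrict (\<lambda>d. fst (restrict (\<lambda>ds. fst Psi (nxt x ds)) (tpaths p (T x)) d)) (tpaths p (T x))
     = restrict (\<lambda>ds. T (nxt x ds)) (tpaths p (T x))"
    by (auto simp: Psi_fst intro!: restrict_ext)
  have "fst RHS x = fst S6 (fst R5 x)" using x by (simp add: comp_hom_fst)
  also have "\<dots> = ((T x, restrict (\<lambda>ds. T (nxt x ds)) (tpaths p (T x))),
     restrict (\<lambda>z. snd (restrict (\<lambda>ds. fst Psi (nxt x ds)) (tpaths p (T x)) (fst z)) (snd z)) (pdir (tri cp cp) (T x, restrict (\<lambda>ds. T (nxt x ds)) (tpaths p (T x)))))"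
    unfolding P5 by (subst assoc_fst[OF m[unfolded P5]]) (simp only: r1 pdir_cofree)
  also have "\<dots> = ((T x, restrict (\<lambda>ds. T (nxt x ds)) (tpaths p (T x))),
     restrict (\<lambda>z. G (nxt x (fst z)) (snd z)) (pdir (tri cp cp) (T x, restrict (\<lambda>ds. T (nxt x ds)) (tpaths p (T x)))))"
    by (rule arg_cong[where f="\<lambda>z. ((T x, restrict (\<lambda>ds. T (nxt x ds)) (tpaths p (T x))), z)"], rule restrict_ext)
       (auto simp: pdir_tri Psi_fst)
  finally show ?thesis .
qed

lemma PL: "fst LHS x = ((T x, restrict (subt (T x)) (tpaths p (T x))),
     restrict (\<lambda>z. G x (fst z @ snd z)) (pdir (tri cp cp) (T x, restrict (subt (T x)) (tpaths p (T x)))))"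
proof -
  have Tm: "T x \<in> ppos cp" and Gm: "G x \<in> PiE (tpaths p (T x)) (\<lambda>_. ppos s)" using Psi_pos[OF x] by auto
  have m: "(T x, G x) \<in> ppos (tri cp s)" using Tm Gm by simp
  have sb: "restrict (\<lambda>ds es. T x (ds @ es)) (tpaths p (T x)) = restrict (subt (T x)) (tpaths p (T x))"
    by (rule restrict_ext) (simp add: subt_def)
  have "fst LHS x = fst XX (T x, G x)" using x by (simp add: comp_hom_fst Psi_fst)
  also have "\<dots> = ((T x, restrict (subt (T x)) (tpaths p (T x))),
     restrict (\<lambda>z. fst (id_hom s) (G x (snd (cofree_delta p) (T x) z))) (pdir (tri cp cp) (T x, restrict (subt (T x)) (tpaths p (T x)))))"
    using m Tm by (subst tri_hom_fst) (simp_all add: cofree_delta_fst sb del: ppos_tri_mem)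
  also have "\<dots> = ((T x, restrict (subt (T x)) (tpaths p (T x))),
     restrict (\<lambda>z. G x (fst z @ snd z)) (pdir (tri cp cp) (T x, restrict (subt (T x)) (tpaths p (T x)))))"
  proof (rule arg_cong[where f="\<lambda>z. ((T x, restrict (subt (T x)) (tpaths p (T x))), z)"], rule restrict_ext)
    fix z assume z: "z \<in> pdir (tri cp cp) (T x, restrict (subt (T x)) (tpaths p (T x)))"
    obtain ds es where ze: "z = (ds,es)" by (cases z)
    have ds: "ds \<in> tpaths p (T x)" and es: "es \<in> tpaths p (\<lambda>es. T x (ds@es))" using z by (auto simp: ze subt_def)
    have "ds @ es \<in> tpaths p (T x)" using ds es by (simp add: tpaths_append)
    then show "fst (id_hom s) (G x (snd (cofree_delta p) (T x) z)) = G x (fst z @ snd z)"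
      using Tm ds es by (simp add: ze cofree_delta_snd id_hom_fst G_mem[OF x])
  qed
  finally show ?thesis .
qed

lemma DR: assumes em: "((ds,es),a) \<in> pdir (tri (tri cp cp) s) (fst RHS x)"
  shows "snd RHS x ((ds,es),a) = comb x ds es a"
proof -
  have ds: "ds \<in> tpaths p (T x)" and es: "es \<in> tpaths p (T (nxt x ds))"
    and a: "a \<in> pdir s (G (nxt x ds) es)" using em by (auto simp: P6)
  have Tm: "T x \<in> ppos cp" using Psi_pos[OF x] by simp
  have ny: "nxt x ds \<in> ppos (tri s c)" by (rule nxt_mem[OF x ds])
  obtain a1 e2 where b2: "B (nxt x ds) es a = (a1,e2)" by (cases "B (nxt x ds) es a")
  have a1: "a1 \<in> pdir s (G x ds)" and e2: "e2 \<in> pdir c (snd (nxt x ds) a1)"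
    using B_mem[OF ny es a] b2 by (auto simp: nxt_def)
  obtain a0 e1 where b1: "B x ds a1 = (a0,e1)" by (cases "B x ds a1")
  have a0: "a0 \<in> pdir s I" and e1: "e1 \<in> pdir c (f a0)"
    using B_mem[OF x ds a1] b1 by (auto simp: xe)
  have e2': "e2 \<in> pdir c (cod (f a0) e1)" using e2 a1 b1 by (simp add: nxt_def xe)
  have m5: "fst R5 x \<in> ppos (tri cp (tri cp s))" by (rule is_hom_pos[OF R5h x])
  have m4: "fst R4 x \<in> ppos (tri cp (tri s c))" by (rule is_hom_pos[OF R4h x])
  have m3: "fst R3 x \<in> ppos (tri (tri cp s) c)" by (rule is_hom_pos[OF R3h x])
  have m2: "fst R2 x \<in> ppos (tri (tri s c) c)" by (rule is_hom_pos[OF R2h x])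
  have m1: "fst S1 x \<in> ppos (tri s (tri c c))" by (rule is_hom_pos[OF S1h x])
  have em': "((ds,es),a) \<in> pdir (tri (tri cp cp) s) (fst S6 (fst R5 x))" using em x by (simp add: comp_hom_fst)
  have st6: "snd RHS x ((ds,es),a) = snd R5 x (snd S6 (fst R5 x) ((ds,es),a))"
    by (rule comp_hom_snd'[OF x em])
  have d6: "snd S6 (fst R5 x) ((ds,es),a) = (ds,(es,a))"
    using m5 em' unfolding P5 by (subst assoc_snd) simp_all
  have e5m: "(ds,(es,a)) \<in> pdir (tri cp (tri cp s)) (fst R5 x)"
    using is_hom_dir[OF S6h m5 em'] d6 by simp
  have st5: "snd R5 x (ds,(es,a)) = snd R4 x (snd S5 (fst R4 x) (ds,(es,a)))"
    by (rule comp_hom_snd'[OF x e5m])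
  have e5m': "(ds,(es,a)) \<in> pdir (tri cp (tri cp s)) (fst S5 (fst R4 x))" using e5m x by (simp add: comp_hom_fst)
  have d5: "snd S5 (fst R4 x) (ds,(es,a)) = (ds, (a1,e2))"
    using m4 e5m' unfolding P4 by (subst tri_hom_snd') (simp_all add: id_hom_snd Tm ds b2[unfolded B_def] del: ppos_tri_mem)
  have e4m: "(ds,(a1,e2)) \<in> pdir (tri cp (tri s c)) (fst R4 x)"
    using is_hom_dir[OF S5h m4 e5m'] d5 by simp
  have st4: "snd R4 x (ds,(a1,e2)) = snd R3 x (snd S4 (fst R3 x) (ds,(a1,e2)))"
    by (rule comp_hom_snd'[OF x e4m])
  have e4m': "(ds,(a1,e2)) \<in> pdir (tri cp (tri s c)) (fst S4 (fst R3 x))" using e4m x by (simp add: comp_hom_fst)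
  have d4: "snd S4 (fst R3 x) (ds,(a1,e2)) = ((ds,a1),e2)"
    using m3 e4m' unfolding P3 by (subst assoc_inv_snd) simp_all
  have e3m: "((ds,a1),e2) \<in> pdir (tri (tri cp s) c) (fst R3 x)"
    using is_hom_dir[OF S4h m3 e4m'] d4 by simp
  have st3: "snd R3 x ((ds,a1),e2) = snd R2 x (snd S3 (fst R2 x) ((ds,a1),e2))"
    by (rule comp_hom_snd'[OF x e3m])
  have e3m': "((ds,a1),e2) \<in> pdir (tri (tri cp s) c) (fst S3 (fst R2 x))" using e3m x by (simp add: comp_hom_fst)
  have codm: "cod (f a0) e1 \<in> ppos c" using cod_mem[OF fm[OF a0] e1] .
  have ae: "(a0,e1) \<in> pdir (tri s c) x" using a0 e1 by (simp add: xe)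
  have d3: "snd S3 (fst R2 x) ((ds,a1),e2) = ((a0,e1),e2)"
    using m2 e3m' ae unfolding P2
    by (subst tri_hom_snd') (simp_all add: id_hom_snd codm e2' b1[unfolded B_def] xe[symmetric] a0 e1 del: ppos_tri_mem)
  have e2m: "((a0,e1),e2) \<in> pdir (tri (tri s c) c) (fst R2 x)"
    using is_hom_dir[OF S3h m2 e3m'] d3 by simp
  have st2: "snd R2 x ((a0,e1),e2) = snd S1 x (snd S2 (fst S1 x) ((a0,e1),e2))"
    by (rule comp_hom_snd'[OF x e2m])
  have e2m': "((a0,e1),e2) \<in> pdir (tri (tri s c) c) (fst S2 (fst S1 x))" using e2m x by (simp add: comp_hom_fst)
  have d2: "snd S2 (fst S1 x) ((a0,e1),e2) = (a0,(e1,e2))"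
    using m1 e2m' unfolding P1 by (subst assoc_snd) simp_all
  have e1m: "(a0,(e1,e2)) \<in> pdir (tri s (tri c c)) (fst S1 x)"
    using is_hom_dir[OF S2h m1 e2m'] d2 by simp
  have d1: "snd S1 x (a0,(e1,e2)) = (a0, dc (f a0) e1 e2)"
    using x e1m unfolding xe by (subst tri_hom_snd') (simp_all add: id_hom_snd I a0 dc_def del: ppos_tri_mem)
  have "comb x ds es a = (a0, dc (f a0) e1 e2)" unfolding comb_def Let_def b2 fst_conv snd_conv b1 by (simp add: xe)
  thus ?thesis using st6 d6 st5 d5 st4 d4 st3 d3 st2 d2 d1 by simp
qed

lemma DL: assumes em: "((ds,es),a) \<in> pdir (tri (tri cp cp) s) (fst LHS x)"
  shows "snd LHS x ((ds,es),a) = B x (ds@es) a"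
proof -
  have Tm: "T x \<in> ppos cp" and Gm: "G x \<in> PiE (tpaths p (T x)) (\<lambda>_. ppos s)" using Psi_pos[OF x] by auto
  have m: "(T x, G x) \<in> ppos (tri cp s)" using Tm Gm by simp
  have ds: "ds \<in> tpaths p (T x)" and es: "es \<in> tpaths p (\<lambda>es. T x (ds@es))"
    and a: "a \<in> pdir s (G x (ds@es))" using em by (auto simp: PL subt_def)
  have dse: "ds @ es \<in> tpaths p (T x)" using ds es by (simp add: tpaths_append)
  have em': "((ds,es),a) \<in> pdir (tri (tri cp cp) s) (fst XX (T x, G x))" using em x by (simp add: comp_hom_fst Psi_fst)
  have "snd LHS x ((ds,es),a) = snd Psi x (snd XX (T x, G x) ((ds,es),a))"
    using comp_hom_snd'[OF x em] by (simp add: Psi_fst)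
  also have "snd XX (T x, G x) ((ds,es),a) = (ds@es, a)"
    using m em' by (subst tri_hom_snd') (simp_all add: cofree_delta_snd Tm ds es id_hom_snd G_mem[OF x dse] a del: ppos_tri_mem)
  finally show ?thesis by (simp add: B_def)
qed

lemma pw_M: "(fst LHS x = fst RHS x \<and> (\<forall>e\<in>pdir (tri (tri cp cp) s) (fst LHS x). snd LHS x e = snd RHS x e)) \<longleftrightarrow>
  (\<forall>ds\<in>tpaths p (T x). T (nxt x ds) = subt (T x) ds \<and> (\<forall>es\<in>tpaths p (subt (T x) ds). G (nxt x ds) es = G x (ds@es) \<and>
      (\<forall>a\<in>pdir s (G x (ds@es)). B x (ds@es) a = comb x ds es a)))"
  (is "?L \<longleftrightarrow> ?R")
proof -
  let ?R1 = "restrict (subt (T x)) (tpaths p (T x))"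
  let ?R2 = "restrict (\<lambda>ds. T (nxt x ds)) (tpaths p (T x))"
  have pos: "fst LHS x = fst RHS x \<longleftrightarrow>
    (\<forall>ds\<in>tpaths p (T x). T (nxt x ds) = subt (T x) ds) \<and>
    (\<forall>ds\<in>tpaths p (T x). \<forall>es\<in>tpaths p (subt (T x) ds). G (nxt x ds) es = G x (ds@es))"
  proof -
    have "fst LHS x = fst RHS x \<longleftrightarrow> ?R1 = ?R2 \<and>
       restrict (\<lambda>z. G x (fst z @ snd z)) (pdir (tri cp cp) (T x, ?R1)) =
       restrict (\<lambda>z. G (nxt x (fst z)) (snd z)) (pdir (tri cp cp) (T x, ?R2))"
      unfolding PL P6 by auto
    also have "\<dots> \<longleftrightarrow> ?R1 = ?R2 \<and>
       restrict (\<lambda>z. G x (fst z @ snd z)) (pdir (tri cp cp) (T x, ?R1)) =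
       restrict (\<lambda>z. G (nxt x (fst z)) (snd z)) (pdir (tri cp cp) (T x, ?R1))"
      by auto
    also have "\<dots> \<longleftrightarrow> (\<forall>ds\<in>tpaths p (T x). T (nxt x ds) = subt (T x) ds) \<and>
       (\<forall>z\<in>pdir (tri cp cp) (T x, ?R1). G x (fst z @ snd z) = G (nxt x (fst z)) (snd z))"
      unfolding restrict_eq_iff by auto
    also have "\<dots> \<longleftrightarrow> (\<forall>ds\<in>tpaths p (T x). T (nxt x ds) = subt (T x) ds) \<and>
    (\<forall>ds\<in>tpaths p (T x). \<forall>es\<in>tpaths p (subt (T x) ds). G (nxt x ds) es = G x (ds@es))"
      by (auto simp: pdir_tri)
    finally show ?thesis .
  qed
  show ?thesis
  proof
    assume L: ?L
    hence fe: "fst LHS x = fst RHS x" by blast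
    from L pos have A: "\<forall>ds\<in>tpaths p (T x). T (nxt x ds) = subt (T x) ds"
      and Bc: "\<forall>ds\<in>tpaths p (T x). \<forall>es\<in>tpaths p (subt (T x) ds). G (nxt x ds) es = G x (ds@es)" by blast+
    show ?R
    proof (intro ballI conjI)
      fix ds assume ds: "ds \<in> tpaths p (T x)"
      show "T (nxt x ds) = subt (T x) ds" using A ds by blast
      fix es assume es: "es \<in> tpaths p (subt (T x) ds)"
      show "G (nxt x ds) es = G x (ds@es)" using Bc ds es by blast
      fix a assume a: "a \<in> pdir s (G x (ds@es))"
      have em: "((ds,es),a) \<in> pdir (tri (tri cp cp) s) (fst LHS x)" using ds es a by (simp add: PL)
      have "snd LHS x ((ds,es),a) = snd RHS x ((ds,es),a)" using L em by blast
      thus "B x (ds@es) a = comb x ds es a" using DL[OF em] DR[OF em[unfolded fe]] by simp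
    qed
  next
    assume R: ?R
    hence fe: "fst LHS x = fst RHS x" using pos by blast
    show ?L
    proof (intro conjI ballI fe)
      fix e assume e: "e \<in> pdir (tri (tri cp cp) s) (fst LHS x)"
      obtain ds es a where ee: "e = ((ds,es),a)" by (rule prod_cases_l3)
      have ds: "ds \<in> tpaths p (T x)" and es: "es \<in> tpaths p (subt (T x) ds)" and a: "a \<in> pdir s (G x (ds@es))"
        using e by (auto simp: PL ee)
      show "snd LHS x e = snd RHS x e"
        using DL[OF e[unfolded ee]] DR[OF e[unfolded ee fe]] R ds es a by (simp add: ee)
    qed
  qed
qed

end

definition CM where "CM \<longleftrightarrow> (\<forall>x\<in>ppos (tri s c). \<forall>ds\<in>tpaths p (T x). T (nxt x ds) = subt (T x) ds \<and>
   (\<forall>es\<in>tpaths p (subt (T x) ds). G (nxt x ds) es = G x (ds@es) \<and>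
      (\<forall>a\<in>pdir s (G x (ds@es)). B x (ds@es) a = comb x ds es a)))"

lemma EqM_iff: "LHS = RHS \<longleftrightarrow> CM"
  unfolding hom_eq_iff[OF LHSh RHSh] CM_def
proof (intro ball_cong[OF refl])
  fix x assume x: "x \<in> ppos (tri s c)"
  obtain I f where xe: "x = (I,f)" by (cases x)
  show "(fst LHS x = fst RHS x \<and> (\<forall>e\<in>pdir (tri (tri cp cp) s) (fst LHS x). snd LHS x e = snd RHS x e)) \<longleftrightarrow>
     (\<forall>ds\<in>tpaths p (T x). T (nxt x ds) = subt (T x) ds \<and> (\<forall>es\<in>tpaths p (subt (T x) ds). G (nxt x ds) es = G x (ds@es) \<and>
      (\<forall>a\<in>pdir s (G x (ds@es)). B x (ds@es) a = comb x ds es a)))"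
    by (rule pw_M[OF xe x])
qed

lemma handler_iff: "handler (cofree p) (cofree_eps p) (cofree_delta p) c eps delta s Psi \<longleftrightarrow> CU \<and> CM"
  unfolding handler_def using Psih EqU_iff EqM_iff by simp

end



context hctx
begin

abbreviation "FF \<equiv> tri_hom (cofree p) s p s (cofree_proj p) (id_hom s)"
abbreviation "FP \<equiv> comp_hom (tri s c) (tri p s) FF Psi"

lemma FFh: "is_hom (tri (cofree p) s) (tri p s) FF" by (rule tri_hom_hom[OF cofree_proj_hom id_hom_hom])
lemma FPh: "is_hom (tri s c) (tri p s) FP" by (rule comp_hom_hom[OF Psih FFh])

lemma FP_fst: assumes x: "x \<in> ppos (tri s c)"
  shows "fst FP x = (T x [], restrict (\<lambda>d. G x [d]) (pdir p (T x [])))"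
proof -
  have Tm: "T x \<in> ppos cp" and Gm: "G x \<in> PiE (tpaths p (T x)) (\<lambda>_. ppos s)" using Psi_pos[OF x] by auto
  have m: "(T x, G x) \<in> ppos (tri cp s)" using Tm Gm by simp
  have "fst FP x = fst FF (T x, G x)" using x by (simp add: comp_hom_fst Psi_fst)
  also have "\<dots> = (T x [], restrict (\<lambda>d. fst (id_hom s) (G x (snd (cofree_proj p) (T x) d))) (pdir p (T x [])))"
    using m Tm by (subst tri_hom_fst) (simp_all add: cofree_proj_fst del: ppos_tri_mem)
  also have "\<dots> = (T x [], restrict (\<lambda>d. G x [d]) (pdir p (T x [])))"
    using Tm by (auto intro!: restrict_ext simp: cofree_proj_snd id_hom_fst G_mem[OF x])
  finally show ?thesis .
qed

lemma FP_snd: assumes x: "x \<in> ppos (tri s c)" and d: "d \<in> pdir p (T x [])" and a: "a \<in> pdir s (G x [d])"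
  shows "snd FP x (d,a) = B x [d] a"
proof -
  have Tm: "T x \<in> ppos cp" and Gm: "G x \<in> PiE (tpaths p (T x)) (\<lambda>_. ppos s)" using Psi_pos[OF x] by auto
  have m: "(T x, G x) \<in> ppos (tri cp s)" using Tm Gm by simp
  have em: "(d,a) \<in> pdir (tri p s) (fst FP x)" using d a by (simp add: FP_fst[OF x])
  have em': "(d,a) \<in> pdir (tri p s) (fst FF (T x, G x))" using em x by (simp add: comp_hom_fst Psi_fst)
  have "snd FP x (d,a) = snd Psi x (snd FF (T x, G x) (d,a))"
    using comp_hom_snd'[OF x em] by (simp add: Psi_fst)
  also have "snd FF (T x, G x) (d,a) = ([d], a)"
    using m em' Tm d a G_mem[OF x, of "[d]"] by (subst tri_hom_snd') (simp_all add: cofree_proj_snd id_hom_snd del: ppos_tri_mem)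
  finally show ?thesis by (simp add: B_def)
qed

lemma rec_T: assumes cm: CM and x: "x \<in> ppos (tri s c)" and d: "d \<in> pdir p (T x [])"
  shows "T (nxt x [d]) = (\<lambda>es. T x (d#es))"
  using cm x d unfolding CM_def subt_def by (metis append_Cons append_Nil tpaths_Cons tpaths_Nil)

lemma rec_G: assumes cm: CM and x: "x \<in> ppos (tri s c)" and d: "d \<in> pdir p (T x [])"
  and es: "es \<in> tpaths p (T (nxt x [d]))"
  shows "G x (d#es) = G (nxt x [d]) es"
proof -
  have ds: "[d] \<in> tpaths p (T x)" using d by simp
  have "es \<in> tpaths p (subt (T x) [d])" using es rec_T[OF cm x d] by (simp add: subt_def)
  thus ?thesis using cm x ds unfolding CM_def by auto
qed

lemma rec_B: assumes cm: CM and x: "x \<in> ppos (tri s c)" and d: "d \<in> pdir p (T x [])"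
  and es: "es \<in> tpaths p (T (nxt x [d]))" and a: "a \<in> pdir s (G x (d#es))"
  shows "B x (d#es) a = comb x [d] es a"
proof -
  have ds: "[d] \<in> tpaths p (T x)" using d by simp
  have es': "es \<in> tpaths p (subt (T x) [d])" using es rec_T[OF cm x d] by (simp add: subt_def)
  from cm x ds es' have "\<forall>a\<in>pdir s (G x ([d]@es)). B x ([d]@es) a = comb x [d] es a" unfolding CM_def by blast
  thus ?thesis using a by simp
qed

lemma T_undef: "x \<in> ppos (tri s c) \<Longrightarrow> ds \<notin> tpaths p (T x) \<Longrightarrow> T x ds = undefined"
  using Psi_pos(1)[of x] by (simp add: cofree_mem)

end

lemma handler_inj:
  assumes h1: "hctx c eps delta p s Psi1" and h2: "hctx c eps delta p s Psi2"
    and H1: "handler (cofree p) (cofree_eps p) (cofree_delta p) c eps delta s Psi1"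
    and H2: "handler (cofree p) (cofree_eps p) (cofree_delta p) c eps delta s Psi2"
    and E: "comp_hom (tri s c) (tri p s) (tri_hom (cofree p) s p s (cofree_proj p) (id_hom s)) Psi1
          = comp_hom (tri s c) (tri p s) (tri_hom (cofree p) s p s (cofree_proj p) (id_hom s)) Psi2"
  shows "Psi1 = Psi2"
proof -
  interpret h1: hctx c eps delta p s Psi1 using h1 by simp
  interpret h2: hctx c eps delta p s Psi2 using h2 by simp
  have cu1: h1.CU and cm1: h1.CM using H1 h1.handler_iff by auto
  have cu2: h2.CU and cm2: h2.CM using H2 h2.handler_iff by auto
  have T0: "h1.T x [] = h2.T x []" if x: "x \<in> ppos (tri s c)" for x
    using arg_cong[OF E, of "\<lambda>F. fst (fst F x)"] h1.FP_fst[OF x] h2.FP_fst[OF x] by simp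
  have G1: "h1.G x [d] = h2.G x [d]" if x: "x \<in> ppos (tri s c)" and d: "d \<in> pdir p (h1.T x [])" for x d
  proof -
    have "restrict (\<lambda>d. h1.G x [d]) (pdir p (h1.T x [])) = restrict (\<lambda>d. h2.G x [d]) (pdir p (h1.T x []))"
      using arg_cong[OF E, of "\<lambda>F. snd (fst F x)"] h1.FP_fst[OF x] h2.FP_fst[OF x] T0[OF x] by simp
    thus ?thesis using d by (simp add: restrict_eq_iff)
  qed
  have B1: "h1.B x [d] a = h2.B x [d] a" if x: "x \<in> ppos (tri s c)" and d: "d \<in> pdir p (h1.T x [])"
    and a: "a \<in> pdir s (h1.G x [d])" for x d a
  proof -
    have "snd h1.FP x (d,a) = snd h2.FP x (d,a)" using E by simp
    thus ?thesis using h1.FP_snd[OF x d a] h2.FP_snd[OF x, of d a] d a T0[OF x] G1[OF x d] by simp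
  qed
  have N1: "h1.nxt x [d] = h2.nxt x [d]" if x: "x \<in> ppos (tri s c)" and d: "d \<in> pdir p (h1.T x [])" for x d
    unfolding h1.nxt_def h2.nxt_def using G1[OF x d] B1[OF x d]
    by (auto intro!: restrict_ext)
  have TT: "\<forall>x\<in>ppos (tri s c). h1.T x ds = h2.T x ds" for ds
  proof (induction ds)
    case Nil
    then show ?case using T0 by blast
  next
    case (Cons d ds)
    show ?case
    proof
      fix x assume x: "x \<in> ppos (tri s c)"
      show "h1.T x (d#ds) = h2.T x (d#ds)"
      proof (cases "d \<in> pdir p (h1.T x [])")
        case False
        then have "d#ds \<notin> tpaths p (h1.T x)" "d#ds \<notin> tpaths p (h2.T x)" using T0[OF x] by auto
        then show ?thesis using h1.T_undef[OF x] h2.T_undef[OF x] by simp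
      next
        case True
        have d2: "d \<in> pdir p (h2.T x [])" using True T0[OF x] by simp
        have y: "h1.nxt x [d] \<in> ppos (tri s c)" using h1.nxt_mem[OF x, of "[d]"] True by simp
        have "h1.T x (d#ds) = h1.T (h1.nxt x [d]) ds" using h1.rec_T[OF cm1 x True] by simp
        also have "\<dots> = h2.T (h1.nxt x [d]) ds" using Cons y by blast
        also have "\<dots> = h2.T x (d#ds)" using h2.rec_T[OF cm2 x d2] N1[OF x True] by simp
        finally show ?thesis .
      qed
    qed
  qed
  have TF: "h1.T x = h2.T x" if "x \<in> ppos (tri s c)" for x using TT that by blast
  have GB: "\<forall>x\<in>ppos (tri s c). ds \<in> tpaths p (h1.T x) \<longrightarrow> h1.G x ds = h2.G x ds \<and> (\<forall>a\<in>pdir s (h1.G x ds). h1.B x ds a = h2.B x ds a)" for ds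
  proof (induction ds)
    case Nil
    then show ?case using cu1 cu2 unfolding h1.CU_def h2.CU_def by simp
  next
    case (Cons d ds)
    show ?case
    proof (intro ballI impI)
      fix x assume x: "x \<in> ppos (tri s c)" and dds: "d # ds \<in> tpaths p (h1.T x)"
      have d: "d \<in> pdir p (h1.T x [])" using dds by simp
      have d2: "d \<in> pdir p (h2.T x [])" using d T0[OF x] by simp
      let ?y = "h1.nxt x [d]"
      have y: "?y \<in> ppos (tri s c)" using h1.nxt_mem[OF x, of "[d]"] d by simp
      have ny: "h2.nxt x [d] = ?y" using N1[OF x d] by simp
      have ds: "ds \<in> tpaths p (h1.T ?y)" using dds h1.rec_T[OF cm1 x d] by simp
      have ds2: "ds \<in> tpaths p (h2.T ?y)" using ds TF[OF y] by simp
      have IH: "h1.G ?y ds = h2.G ?y ds \<and> (\<forall>a\<in>pdir s (h1.G ?y ds). h1.B ?y ds a = h2.B ?y ds a)"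
        using Cons y ds by blast
      have Ge1: "h1.G x (d#ds) = h1.G ?y ds" by (rule h1.rec_G[OF cm1 x d ds])
      have Ge2: "h2.G x (d#ds) = h2.G ?y ds" using h2.rec_G[OF cm2 x d2, of ds] ny ds2 by simp
      show "h1.G x (d#ds) = h2.G x (d#ds) \<and> (\<forall>a\<in>pdir s (h1.G x (d#ds)). h1.B x (d#ds) a = h2.B x (d#ds) a)"
      proof (intro conjI ballI)
        show "h1.G x (d#ds) = h2.G x (d#ds)" using Ge1 Ge2 IH by simp
        fix a assume a: "a \<in> pdir s (h1.G x (d#ds))"
        have a': "a \<in> pdir s (h1.G ?y ds)" using a Ge1 by simp
        have b2: "h1.B ?y ds a = h2.B ?y ds a" using IH a' by blast
        have fb: "fst (h1.B ?y ds a) \<in> pdir s (h1.G x [d])"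
          using h1.B_mem[OF y ds a'] by (cases "h1.B ?y ds a") (simp add: h1.nxt_def)
        have "h1.B x (d#ds) a = h1.comb x [d] ds a" by (rule h1.rec_B[OF cm1 x d ds a])
        also have "\<dots> = h2.comb x [d] ds a"
          unfolding h1.comb_def h2.comb_def ny b2[symmetric] using B1[OF x d fb] by (simp add: Let_def)
        also have "\<dots> = h2.B x (d#ds) a"
          using h2.rec_B[OF cm2 x d2, of ds a] ny ds2 a Ge1 Ge2 IH by simp
        finally show "h1.B x (d#ds) a = h2.B x (d#ds) a" .
      qed
    qed
  qed
  show ?thesis
  proof (rule hom_eqI[OF h1.Psih h2.Psih])
    fix x assume x: "x \<in> ppos (tri s c)"
    have "h1.G x = h2.G x"
      by (rule PiE_ext[OF h1.Psi_pos(2)[OF x] h2.Psi_pos(2)[OF x, folded TF[OF x]]]) (use GB x in blast)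
    thus "fst Psi1 x = fst Psi2 x" using TF[OF x] by (simp add: h1.Psi_fst h2.Psi_fst)
  next
    fix x e assume x: "x \<in> ppos (tri s c)" and e: "e \<in> pdir (tri (cofree p) s) (fst Psi1 x)"
    obtain ds a where ee: "e = (ds,a)" by (cases e)
    have ds: "ds \<in> tpaths p (h1.T x)" and a: "a \<in> pdir s (h1.G x ds)" using e by (auto simp: ee h1.Psi_fst)
    show "snd Psi1 x e = snd Psi2 x e" using GB x ds a by (simp add: ee h1.B_def h2.B_def)
  qed
qed




locale sctx = comon c eps delta
  for c :: "('j,'e) poly" and eps :: "('j \<Rightarrow> unit) \<times> ('j \<Rightarrow> unit \<Rightarrow> 'e)"
    and delta :: "('j \<Rightarrow> 'j \<times> ('e \<Rightarrow> 'j)) \<times> ('j \<Rightarrow> 'e \<times> 'e \<Rightarrow> 'e)" +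
  fixes p :: "('i,'d) poly" and s :: "('k,'f) poly" and phi
  assumes phih: "is_hom (tri s c) (tri p s) phi"
begin

definition root where "root x = fst (fst phi x)"
definition nx where "nx x d = snd (fst phi x) d"
definition bk where "bk x d a = snd phi x (d,a)"
definition step where "step x d = (nx x d, restrict (\<lambda>a. cod (snd x (fst (bk x d a))) (snd (bk x d a))) (pdir s (nx x d)))"

primrec run where
  "run x [] = x"
| "run x (d#ds) = run (step x d) ds"

primrec valid where
  "valid x [] = True"
| "valid x (d#ds) = (d \<in> pdir p (root x) \<and> valid (step x d) ds)"

primrec bb where
  "bb x [] a = (a, ec (snd x a))"
| "bb x (d#ds) a = (let b2 = bb (step x d) ds a; b1 = bk x d (fst b2) in (fst b1, dc (snd x (fst b1)) (snd b1) (snd b2)))"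

definition tree where "tree x ds = (if valid x ds then root (run x ds) else undefined)"
definition gg where "gg x ds = (if valid x ds then fst (run x ds) else undefined)"

lemma nx_fun: "nx x = snd (fst phi x)" by (rule ext) (simp add: nx_def)
lemma phi_fst: "fst phi x = (root x, nx x)" by (simp add: root_def nx_fun)

lemma phi_pos: assumes x: "x \<in> ppos (tri s c)"
  shows "root x \<in> ppos p" "nx x \<in> PiE (pdir p (root x)) (\<lambda>_. ppos s)"
  using is_hom_pos[OF phih x] by (simp_all add: phi_fst)

lemma bk_mem: assumes x: "x = (I,f)" "x \<in> ppos (tri s c)" and d: "d \<in> pdir p (root x)" and a: "a \<in> pdir s (nx x d)"
  shows "fst (bk x d a) \<in> pdir s I" "snd (bk x d a) \<in> pdir c (f (fst (bk x d a)))"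
  using is_hom_dir[OF phih x(2), of "(d,a)"] d a x(1) by (cases "bk x d a"; simp add: phi_fst bk_def)+

lemma step_mem: assumes x: "x \<in> ppos (tri s c)" and d: "d \<in> pdir p (root x)"
  shows "step x d \<in> ppos (tri s c)"
proof -
  obtain I f where xe: "x = (I,f)" by (cases x)
  have f: "f \<in> PiE (pdir s I) (\<lambda>_. ppos c)" using x by (auto simp: xe)
  have "nx x d \<in> ppos s" using phi_pos(2)[OF x] d by auto
  then show ?thesis unfolding step_def using bk_mem[OF xe x d] f
    by (auto intro!: cod_mem simp: xe)
qed

lemma run_mem: "x \<in> ppos (tri s c) \<Longrightarrow> valid x ds \<Longrightarrow> run x ds \<in> ppos (tri s c)"
  by (induction ds arbitrary: x) (auto simp: step_mem)

lemma tree_Nil: "tree x [] = root x" by (simp add: tree_def)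
lemma tree_Cons: "d \<in> pdir p (root x) \<Longrightarrow> (\<lambda>es. tree x (d#es)) = tree (step x d)"
  by (simp add: tree_def fun_eq_iff)
lemma gg_Cons: "d \<in> pdir p (root x) \<Longrightarrow> gg x (d#es) = gg (step x d) es"
  by (simp add: gg_def)

lemma tpaths_tree: "ds \<in> tpaths p (tree x) \<longleftrightarrow> valid x ds"
proof (induction ds arbitrary: x)
  case Nil then show ?case by simp
next
  case (Cons d ds)
  show ?case
  proof (cases "d \<in> pdir p (root x)")
    case True
    then show ?thesis using Cons tree_Cons[OF True] by (simp add: tree_Nil)
  next
    case False
    then show ?thesis by (simp add: tree_Nil)
  qed
qed

lemma tree_mem: assumes x: "x \<in> ppos (tri s c)" shows "tree x \<in> ppos (cofree p)"
  unfolding cofree_mem using run_mem[OF x] phi_pos(1)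
  by (auto simp: tree_def tpaths_tree)

lemma gg_mem: assumes x: "x \<in> ppos (tri s c)" shows "gg x \<in> PiE (tpaths p (tree x)) (\<lambda>_. ppos s)"
proof -
  have "fst (run x ds) \<in> ppos s" if "valid x ds" for ds
    using run_mem[OF x that] by (cases "run x ds") auto
  thus ?thesis by (auto simp: gg_def PiE_def extensional_def tpaths_tree)
qed

lemma bb_mem: "x \<in> ppos (tri s c) \<Longrightarrow> valid x ds \<Longrightarrow> a \<in> pdir s (gg x ds) \<Longrightarrow> bb x ds a \<in> pdir (tri s c) x"
proof (induction ds arbitrary: x)
  case Nil
  obtain I f where xe: "x = (I,f)" by (cases x)
  have f: "f \<in> PiE (pdir s I) (\<lambda>_. ppos c)" using Nil by (auto simp: xe)
  then show ?case using Nil ec_mem by (auto simp: xe gg_def)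
next
  case (Cons d ds)
  obtain I f where xe: "x = (I,f)" by (cases x)
  have f: "f \<in> PiE (pdir s I) (\<lambda>_. ppos c)" using Cons by (auto simp: xe)
  have d: "d \<in> pdir p (root x)" and v: "valid (step x d) ds" using Cons by auto
  have sm: "step x d \<in> ppos (tri s c)" by (rule step_mem[OF Cons(2) d])
  have a: "a \<in> pdir s (gg (step x d) ds)" using Cons(4) gg_Cons[OF d] by simp
  have b2: "bb (step x d) ds a \<in> pdir (tri s c) (step x d)" by (rule Cons.IH[OF sm v a])
  obtain a1 e2 where b2e: "bb (step x d) ds a = (a1,e2)" by (cases "bb (step x d) ds a")
  have a1: "a1 \<in> pdir s (nx x d)" and e2: "e2 \<in> pdir c (cod (f (fst (bk x d a1))) (snd (bk x d a1)))"
    using b2 b2e by (auto simp: step_def xe)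
  have m1: "fst (bk x d a1) \<in> pdir s I" "snd (bk x d a1) \<in> pdir c (f (fst (bk x d a1)))"
    using bk_mem[OF xe Cons(2) d a1] by auto
  have "dc (f (fst (bk x d a1))) (snd (bk x d a1)) e2 \<in> pdir c (f (fst (bk x d a1)))"
    using dc_mem[OF _ m1(2) e2] f m1(1) by auto
  then show ?case unfolding bb.simps Let_def b2e fst_conv snd_conv using m1 by (simp add: xe)
qed

definition Psi0 where "Psi0 = restrict_hom (tri s c) (tri (cofree p) s) (\<lambda>x. (tree x, gg x), \<lambda>x (ds,a). bb x ds a)"

lemma Psi0h: "is_hom (tri s c) (tri (cofree p) s) Psi0"
  unfolding Psi0_def
proof (rule is_hom_restrict, goal_cases)
  case (1 x) then show ?case using tree_mem gg_mem by simp
next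
  case (2 x e)
  obtain ds a where ee: "e = (ds,a)" by (cases e)
  show ?case using 2 bb_mem by (auto simp: ee tpaths_tree)
qed

lemma Psi0_fst: "x \<in> ppos (tri s c) \<Longrightarrow> fst Psi0 x = (tree x, gg x)"
  by (simp add: Psi0_def fst_restrict_hom)
lemma Psi0_snd: "x \<in> ppos (tri s c) \<Longrightarrow> valid x ds \<Longrightarrow> a \<in> pdir s (gg x ds) \<Longrightarrow> snd Psi0 x (ds,a) = bb x ds a"
  by (simp add: Psi0_def restrict_hom_def tpaths_tree)

lemma valid_append: "valid x (ds@es) \<longleftrightarrow> valid x ds \<and> valid (run x ds) es"
  by (induction ds arbitrary: x) auto

lemma run_append: "run x (ds@es) = run (run x ds) es"
  by (induction ds arbitrary: x) auto

lemma tree_append: "valid x ds \<Longrightarrow> (\<lambda>es. tree x (ds@es)) = tree (run x ds)"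
  by (simp add: tree_def fun_eq_iff valid_append run_append)

lemma gg_append: "valid x ds \<Longrightarrow> gg x (ds@es) = gg (run x ds) es"
  by (simp add: gg_def valid_append run_append)

lemma run_nxt: "x \<in> ppos (tri s c) \<Longrightarrow> valid x ds \<Longrightarrow>
  run x ds = (gg x ds, restrict (\<lambda>a. cod (snd x (fst (bb x ds a))) (snd (bb x ds a))) (pdir s (gg x ds)))"
proof (induction ds arbitrary: x)
  case Nil
  obtain I f where xe: "x = (I,f)" by (cases x)
  have f: "f \<in> PiE (pdir s I) (\<lambda>_. ppos c)" using Nil by (auto simp: xe)
  have "restrict (\<lambda>a. cod (f a) (ec (f a))) (pdir s I) = f"
  proof -
    have "restrict (\<lambda>a. cod (f a) (ec (f a))) (pdir s I) = restrict f (pdir s I)"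
      using f left_counit(1) by (intro restrict_ext) auto
    thus ?thesis using f by simp
  qed
  then show ?case by (simp add: xe gg_def)
next
  case (Cons d ds)
  obtain I f where xe: "x = (I,f)" by (cases x)
  have f: "f \<in> PiE (pdir s I) (\<lambda>_. ppos c)" using Cons by (auto simp: xe)
  have d: "d \<in> pdir p (root x)" and v: "valid (step x d) ds" using Cons by auto
  have sm: "step x d \<in> ppos (tri s c)" by (rule step_mem[OF Cons(2) d])
  have "run x (d#ds) = (gg (step x d) ds, restrict (\<lambda>a. cod (snd (step x d) (fst (bb (step x d) ds a))) (snd (bb (step x d) ds a))) (pdir s (gg (step x d) ds)))"
    using Cons.IH[OF sm v] by (simp only: run.simps)
  also have "\<dots> = (gg x (d#ds), restrict (\<lambda>a. cod (snd x (fst (bb x (d#ds) a))) (snd (bb x (d#ds) a))) (pdir s (gg x (d#ds))))"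
  proof (simp only: gg_Cons[OF d], rule arg_cong[where f="\<lambda>z. (gg (step x d) ds, z)"], rule restrict_ext)
    fix a assume a: "a \<in> pdir s (gg (step x d) ds)"
    have b2: "bb (step x d) ds a \<in> pdir (tri s c) (step x d)" by (rule bb_mem[OF sm v a])
    obtain a1 e2 where b2e: "bb (step x d) ds a = (a1,e2)" by (cases "bb (step x d) ds a")
    have a1: "a1 \<in> pdir s (nx x d)" using b2 b2e by (simp add: step_def)
    obtain a0 e1 where b1e: "bk x d a1 = (a0,e1)" by (cases "bk x d a1")
    have a0: "a0 \<in> pdir s I" and e1: "e1 \<in> pdir c (f a0)" using bk_mem[OF xe Cons(2) d a1] b1e by auto
    have sy: "snd (step x d) a1 = cod (f a0) e1" using a1 b1e by (simp add: step_def xe)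
    have e2: "e2 \<in> pdir c (cod (f a0) e1)"
    proof -
      obtain u v where se: "step x d = (u,v)" by (cases "step x d")
      have "(a1,e2) \<in> pdir (tri s c) (u,v)" using b2 b2e se by simp
      thus ?thesis using sy se by simp
    qed
    have fa0: "f a0 \<in> ppos c" using f a0 by auto
    show "cod (snd (step x d) (fst (bb (step x d) ds a))) (snd (bb (step x d) ds a)) =
          cod (snd x (fst (bb x (d # ds) a))) (snd (bb x (d # ds) a))"
      unfolding bb.simps Let_def b2e fst_conv snd_conv b1e sy using coassoc(1)[OF fa0 e1 e2] by (simp add: xe)
  qed
  finally show ?case .
qed

lemma bb_append: "x \<in> ppos (tri s c) \<Longrightarrow> valid x ds \<Longrightarrow> valid (run x ds) es \<Longrightarrow> a \<in> pdir s (gg (run x ds) es) \<Longrightarrow>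
  bb x (ds@es) a = (let b2 = bb (run x ds) es a; b1 = bb x ds (fst b2) in (fst b1, dc (snd x (fst b1)) (snd b1) (snd b2)))"
proof (induction ds arbitrary: x)
  case Nil
  obtain I f where xe: "x = (I,f)" by (cases x)
  have f: "f \<in> PiE (pdir s I) (\<lambda>_. ppos c)" using Nil by (auto simp: xe)
  have b2: "bb x es a \<in> pdir (tri s c) x" using bb_mem[OF Nil(1)] Nil by simp
  obtain a2 e3 where b2e: "bb x es a = (a2,e3)" by (cases "bb x es a")
  have a2: "a2 \<in> pdir s I" and e3: "e3 \<in> pdir c (f a2)" using b2 b2e by (auto simp: xe)
  have "f a2 \<in> ppos c" using f a2 by auto
  then show ?case unfolding append_Nil run.simps Let_def b2e fst_conv snd_conv bb.simps
    using left_counit(2) e3 by (simp add: xe)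
next
  case (Cons d ds)
  obtain I f where xe: "x = (I,f)" by (cases x)
  have f: "f \<in> PiE (pdir s I) (\<lambda>_. ppos c)" using Cons by (auto simp: xe)
  have d: "d \<in> pdir p (root x)" and v: "valid (step x d) ds" using Cons by auto
  let ?y = "step x d"
  have sm: "?y \<in> ppos (tri s c)" by (rule step_mem[OF Cons(2) d])
  have ves: "valid (run ?y ds) es" and a: "a \<in> pdir s (gg (run ?y ds) es)" using Cons by auto
  have IH: "bb ?y (ds@es) a = (let b2 = bb (run ?y ds) es a; b1 = bb ?y ds (fst b2) in (fst b1, dc (snd ?y (fst b1)) (snd b1) (snd b2)))"
    by (rule Cons.IH[OF sm v ves a])
  have rm: "run ?y ds \<in> ppos (tri s c)" by (rule run_mem[OF sm v])
  have b2: "bb (run ?y ds) es a \<in> pdir (tri s c) (run ?y ds)" by (rule bb_mem[OF rm ves a])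
  obtain a2 e3 where b2e: "bb (run ?y ds) es a = (a2,e3)" by (cases "bb (run ?y ds) es a")
  have rn: "run ?y ds = (gg ?y ds, restrict (\<lambda>a. cod (snd ?y (fst (bb ?y ds a))) (snd (bb ?y ds a))) (pdir s (gg ?y ds)))"
    by (rule run_nxt[OF sm v])
  have a2: "a2 \<in> pdir s (gg ?y ds)" and e3': "e3 \<in> pdir c (snd (run ?y ds) a2)"
  proof -
    have "(a2,e3) \<in> pdir (tri s c) (run ?y ds)" using b2 b2e by simp
    moreover obtain r1 r2 where re: "run ?y ds = (r1,r2)" by (cases "run ?y ds")
    moreover have "r1 = gg ?y ds" using rn re by simp
    ultimately show "a2 \<in> pdir s (gg ?y ds)" "e3 \<in> pdir c (snd (run ?y ds) a2)" by simp_all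
  qed
  have b1: "bb ?y ds a2 \<in> pdir (tri s c) ?y" by (rule bb_mem[OF sm v a2])
  obtain a1 e2 where b1e: "bb ?y ds a2 = (a1,e2)" by (cases "bb ?y ds a2")
  have e3: "e3 \<in> pdir c (cod (snd ?y a1) e2)" using e3' a2 b1e by (subst (asm) rn) simp
  have a1: "a1 \<in> pdir s (nx x d)" using b1 b1e by (simp add: step_def)
  obtain a0 e1 where b0e: "bk x d a1 = (a0,e1)" by (cases "bk x d a1")
  have a0: "a0 \<in> pdir s I" and e1: "e1 \<in> pdir c (f a0)" using bk_mem[OF xe Cons(2) d a1] b0e by auto
  have sy: "snd ?y a1 = cod (f a0) e1" using a1 b0e by (simp add: step_def xe)
  have e2: "e2 \<in> pdir c (cod (f a0) e1)"
  proof -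
    obtain u v where se: "step x d = (u,v)" by (cases "step x d")
    have "(a1,e2) \<in> pdir (tri s c) (u,v)" using b1 b1e se by simp
    thus ?thesis using sy se by simp
  qed
  have fa0: "f a0 \<in> ppos c" using f a0 by auto
  have IH': "bb ?y (ds@es) a = (a1, dc (cod (f a0) e1) e2 e3)"
    using IH unfolding Let_def b2e fst_conv snd_conv b1e sy .
  show ?case
    unfolding append_Cons bb.simps run.simps Let_def IH' b2e fst_conv snd_conv b1e b0e
    using coassoc(2)[OF fa0 e1 e2 e3[unfolded sy]] by (simp add: xe)
qed

lemma Psi0_hctx: "hctx c eps delta p s Psi0"
  by (intro hctx.intro comon_axioms hctx_axioms.intro Psi0h)

lemma Psi0_main: "handler (cofree p) (cofree_eps p) (cofree_delta p) c eps delta s Psi0 \<and>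
   comp_hom (tri s c) (tri p s) (tri_hom (cofree p) s p s (cofree_proj p) (id_hom s)) Psi0 = phi"
proof -
  interpret H: hctx c eps delta p s Psi0 by (rule Psi0_hctx)
  have HT: "H.T x = tree x" and HG: "H.G x = gg x" if "x \<in> ppos (tri s c)" for x
    using Psi0_fst[OF that] by (simp_all add: H.T_def H.G_def)
  have HB: "H.B x ds a = bb x ds a" if "x \<in> ppos (tri s c)" "valid x ds" "a \<in> pdir s (gg x ds)" for x ds a
    using Psi0_snd[OF that] by (simp add: H.B_def)
  have HN: "H.nxt x ds = run x ds" if x: "x \<in> ppos (tri s c)" and v: "valid x ds" for x ds
    unfolding H.nxt_def run_nxt[OF x v] HG[OF x] using HB[OF x v]
    by (auto intro!: restrict_ext)
  have CU: H.CU unfolding H.CU_def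
  proof (intro ballI conjI)
    fix x assume x: "x \<in> ppos (tri s c)"
    show "H.G x [] = fst x" by (simp add: HG[OF x] gg_def)
    fix a assume a: "a \<in> pdir s (fst x)"
    show "H.B x [] a = (a, ec (snd x a))" using HB[OF x, of "[]" a] a by (simp add: gg_def)
  qed
  have CM: H.CM unfolding H.CM_def
  proof (intro ballI conjI)
    fix x ds assume x: "x \<in> ppos (tri s c)" and ds: "ds \<in> tpaths p (H.T x)"
    have v: "valid x ds" using ds by (simp add: HT[OF x] tpaths_tree)
    have rm: "run x ds \<in> ppos (tri s c)" by (rule run_mem[OF x v])
    show "H.T (H.nxt x ds) = H.subt (H.T x) ds"
      using tree_append[OF v] by (simp add: HN[OF x v] HT[OF rm] HT[OF x] H.subt_def)
    fix es assume es: "es \<in> tpaths p (H.subt (H.T x) ds)"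
    have ves: "valid (run x ds) es" using es tree_append[OF v] by (simp add: HT[OF x] H.subt_def tpaths_tree)
    show "H.G (H.nxt x ds) es = H.G x (ds @ es)"
      by (simp add: HN[OF x v] HG[OF rm] HG[OF x] gg_append[OF v])
    fix a assume a: "a \<in> pdir s (H.G x (ds @ es))"
    have a': "a \<in> pdir s (gg (run x ds) es)" using a by (simp add: HG[OF x] gg_append[OF v])
    have vv: "valid x (ds@es)" using v ves by (simp add: valid_append)
    have b2: "bb (run x ds) es a \<in> pdir (tri s c) (run x ds)" by (rule bb_mem[OF rm ves a'])
    have fb2: "fst (bb (run x ds) es a) \<in> pdir s (gg x ds)"
    proof -
      obtain u v where re: "run x ds = (u,v)" by (cases "run x ds")
      have "u = gg x ds" using run_nxt[OF x v] re by simp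
      thus ?thesis using b2 re by (cases "bb (run x ds) es a") simp
    qed
    have "H.B x (ds @ es) a = bb x (ds@es) a" using HB[OF x vv] a by (simp add: HG[OF x])
    also have "\<dots> = H.comb x ds es a"
      unfolding bb_append[OF x v ves a'] H.comb_def HN[OF x v] HB[OF rm ves a'] Let_def HB[OF x v fb2] ..
    finally show "H.B x (ds @ es) a = H.comb x ds es a" .
  qed
  have hd: "handler (cofree p) (cofree_eps p) (cofree_delta p) c eps delta s Psi0"
    using H.handler_iff CU CM by simp
  have fp: "H.FP = phi"
  proof (rule hom_eqI[OF H.FPh phih])
    fix x assume x: "x \<in> ppos (tri s c)"
    have "restrict (\<lambda>d. gg x [d]) (pdir p (root x)) = restrict (nx x) (pdir p (root x))"
      by (rule restrict_ext) (simp add: gg_def step_def)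
    also have "\<dots> = nx x" using phi_pos(2)[OF x] by simp
    finally show "fst H.FP x = fst phi x"
      by (simp add: H.FP_fst[OF x] HT[OF x] HG[OF x] tree_Nil phi_fst)
  next
    fix x e assume x: "x \<in> ppos (tri s c)" and e: "e \<in> pdir (tri p s) (fst H.FP x)"
    obtain d a where ee: "e = (d,a)" by (cases e)
    obtain I f where xe: "x = (I,f)" by (cases x)
    have d: "d \<in> pdir p (root x)" and a: "a \<in> pdir s (gg x [d])"
      using e by (auto simp: ee H.FP_fst[OF x] HT[OF x] HG[OF x] tree_Nil)
    have a': "a \<in> pdir s (nx x d)" using a d by (simp add: gg_def step_def)
    have vd: "valid x [d]" using d by simp
    obtain a0 e1 where b1e: "bk x d a = (a0,e1)" by (cases "bk x d a")
    have a0: "a0 \<in> pdir s I" and e1: "e1 \<in> pdir c (f a0)" using bk_mem[OF xe x d a'] b1e by auto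
    have fa0: "f a0 \<in> ppos c" using x a0 by (auto simp: xe)
    have sy: "snd (step x d) a = cod (f a0) e1" using a' b1e by (simp add: step_def xe)
    have "snd H.FP x e = H.B x [d] a" using H.FP_snd[OF x, of d a] d a by (simp add: ee HT[OF x] HG[OF x] tree_Nil)
    also have "\<dots> = bb x [d] a" by (rule HB[OF x vd a])
    also have "\<dots> = (a0, e1)"
      unfolding bb.simps Let_def fst_conv snd_conv b1e sy using right_counit[OF fa0 e1] by (simp add: xe)
    also have "\<dots> = snd phi x e" using b1e by (simp add: bk_def ee)
    finally show "snd H.FP x e = snd phi x e" .
  qed
  show ?thesis using hd fp by simp
qed

end


theorem mainTheorem12:
  fixes p :: "('i,'d) poly" and c :: "('j,'e) poly" and s :: "('k,'f) poly"
    and eps :: "('j \<Rightarrow> unit) \<times> ('j \<Rightarrow> unit \<Rightarrow> 'e)"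
    and delta :: "('j \<Rightarrow> 'j \<times> ('e \<Rightarrow> 'j)) \<times> ('j \<Rightarrow> 'e \<times> 'e \<Rightarrow> 'e)"
  assumes "comonoid c eps delta"
  shows "bij_betw
           (\<lambda>\<Psi>. comp_hom (tri s c) (tri p s)
                   (tri_hom (cofree p) s p s (cofree_proj p) (id_hom s)) \<Psi>)
           {\<Psi>. handler (cofree p) (cofree_eps p) (cofree_delta p) c eps delta s \<Psi>}
           {\<phi>. is_hom (tri s c) (tri p s) \<phi>}"
proof -
  have cm: "comon c eps delta" by (rule comon.intro[OF assms])
  have hc: "hctx c eps delta p s Psi" if "handler (cofree p) (cofree_eps p) (cofree_delta p) c eps delta s Psi" for Psi
    using that cm by (intro hctx.intro hctx_axioms.intro) (simp_all add: handler_def)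
  show ?thesis
    unfolding bij_betw_def
  proof (intro conjI)
    show "inj_on (\<lambda>\<Psi>. comp_hom (tri s c) (tri p s) (tri_hom (cofree p) s p s (cofree_proj p) (id_hom s)) \<Psi>)
           {\<Psi>. handler (cofree p) (cofree_eps p) (cofree_delta p) c eps delta s \<Psi>}"
      by (rule inj_onI) (simp add: handler_inj[OF hc hc])
    show "(\<lambda>\<Psi>. comp_hom (tri s c) (tri p s) (tri_hom (cofree p) s p s (cofree_proj p) (id_hom s)) \<Psi>) `
           {\<Psi>. handler (cofree p) (cofree_eps p) (cofree_delta p) c eps delta s \<Psi>} = {\<phi>. is_hom (tri s c) (tri p s) \<phi>}"
    proof (intro equalityI subsetI)
      fix y assume "y \<in> (\<lambda>\<Psi>. comp_hom (tri s c) (tri p s) (tri_hom (cofree p) s p s (cofree_proj p) (id_hom s)) \<Psi>) `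
           {\<Psi>. handler (cofree p) (cofree_eps p) (cofree_delta p) c eps delta s \<Psi>}"
      then obtain Psi where H: "handler (cofree p) (cofree_eps p) (cofree_delta p) c eps delta s Psi"
        and ye: "y = comp_hom (tri s c) (tri p s) (tri_hom (cofree p) s p s (cofree_proj p) (id_hom s)) Psi" by blast
      have "is_hom (tri s c) (tri (cofree p) s) Psi" using H by (simp add: handler_def)
      then show "y \<in> {\<phi>. is_hom (tri s c) (tri p s) \<phi>}"
        using comp_hom_hom[OF _ tri_hom_hom[OF cofree_proj_hom id_hom_hom]] ye by blast
    next
      fix phi assume "phi \<in> {\<phi>. is_hom (tri s c) (tri p s) \<phi>}"
      then have ph: "is_hom (tri s c) (tri p s) phi" by simp
      have sc: "sctx c eps delta p s phi" using cm ph by (intro sctx.intro sctx_axioms.intro)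
      have "\<exists>Psi. handler (cofree p) (cofree_eps p) (cofree_delta p) c eps delta s Psi \<and>
         comp_hom (tri s c) (tri p s) (tri_hom (cofree p) s p s (cofree_proj p) (id_hom s)) Psi = phi"
        using sctx.Psi0_main[OF sc] by blast
      then show "phi \<in> (\<lambda>\<Psi>. comp_hom (tri s c) (tri p s) (tri_hom (cofree p) s p s (cofree_proj p) (id_hom s)) \<Psi>) `
           {\<Psi>. handler (cofree p) (cofree_eps p) (cofree_delta p) c eps delta s \<Psi>}" by force
    qed
  qed
qed

end
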